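(* There exist universal constants $c,C>0$ such that the following holds. Let $n\ge C$ and let $f:\mathbb{R}^n\to[0,\infty)$ be a $C^2$-smooth, log-concave probability density. Let $X$ be a random vector with density $f$, and assume $\mathbb{E}X=0$ and $n\le\mathbb{E}|X|^2\le2n$. Suppose $\delta>0$ is such that $$|\log f(x_1)-\log f(x_2)|\le\delta n$$ for all $x_1,x_2\in\mathbb{R}^n$ with $|x_1|=|x_2|\le10\sqrt n$. Let $r=\sqrt{\mathbb{E}|X|^2}$. Then for all $\varepsilon$ with $C\sqrt\delta\le\varepsilon\le1$, $$\mathrm{Prob}\left\{\left|\frac{|X|}{r}-1\right|>\varepsilon\right\}\le Ce^{-c\varepsilon^2 n}.$$
   Context: A function $f:\mathbb{R}^n\to[0,\infty)$ is log-concave if $f(\lambda x+(1-\lambda)y)\ge f(x)^\lambda f(y)^{1-\lambda}$ for all $x,y$ and $0<\lambda<1$. $|\cdot|$ is the Euclidean norm. *)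

theory Defs
  imports "HOL-Probability.Probability"
begin

text \<open>R^n is represented by the extensional functions on the index set {..<n},
  i.e. the carrier of the product measure below (values outside {..<n} are undefined).\<close>

definition Rn :: "nat \<Rightarrow> (nat \<Rightarrow> real) set" where
  "Rn n = PiE {..<n} (\<lambda>_. UNIV)"

definition lebn :: "nat \<Rightarrow> (nat \<Rightarrow> real) measure" where
  "lebn n = PiM {..<n} (\<lambda>_. lborel)"

definition enorm :: "nat \<Rightarrow> (nat \<Rightarrow> real) \<Rightarrow> real" where
  "enorm n x = sqrt (\<Sum>i<n. (x i)\<^sup>2)"

definition ccomb :: "nat \<Rightarrow> real \<Rightarrow> (nat \<Rightarrow> real) \<Rightarrow> (nat \<Rightarrow> real) \<Rightarrow> (nat \<Rightarrow> real)" where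
  "ccomb n l x y = (\<lambda>i\<in>{..<n}. l * x i + (1 - l) * y i)"

definition log_concave :: "nat \<Rightarrow> ((nat \<Rightarrow> real) \<Rightarrow> real) \<Rightarrow> bool" where
  "log_concave n f \<longleftrightarrow> (\<forall>x\<in>Rn n. f x \<ge> 0) \<and>
     (\<forall>x\<in>Rn n. \<forall>y\<in>Rn n. \<forall>l::real. 0 < l \<and> l < 1 \<longrightarrow>
        f (ccomb n l x y) \<ge> f x powr l * f y powr (1 - l))"

definition has_partial :: "((nat \<Rightarrow> real) \<Rightarrow> real) \<Rightarrow> nat \<Rightarrow> (nat \<Rightarrow> real) \<Rightarrow> real \<Rightarrow> bool" where
  "has_partial g i x d \<longleftrightarrow> ((\<lambda>t. g (x(i := x i + t))) has_real_derivative d) (at 0)"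

definition C2_on_Rn :: "nat \<Rightarrow> ((nat \<Rightarrow> real) \<Rightarrow> real) \<Rightarrow> bool" where
  "C2_on_Rn n g \<longleftrightarrow> (\<exists>D1 D2.
      continuous_on (Rn n) g \<and>
      (\<forall>i<n. \<forall>x\<in>Rn n. has_partial g i x (D1 i x)) \<and>
      (\<forall>i<n. continuous_on (Rn n) (D1 i)) \<and>
      (\<forall>i<n. \<forall>j<n. \<forall>x\<in>Rn n. has_partial (D1 i) j x (D2 i j x)) \<and>
      (\<forall>i<n. \<forall>j<n. continuous_on (Rn n) (D2 i j)))"

definition prob_density :: "nat \<Rightarrow> ((nat \<Rightarrow> real) \<Rightarrow> real) \<Rightarrow> bool" where
  "prob_density n f \<longleftrightarrow> f \<in> borel_measurable (lebn n) \<and> (\<forall>x\<in>Rn n. f x \<ge> 0) \<and>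
     integrable (lebn n) f \<and> integral\<^sup>L (lebn n) f = 1"

end

theory Submission
  imports Defs
begin

definition sc :: "nat \<Rightarrow> real \<Rightarrow> (nat \<Rightarrow> real) \<Rightarrow> (nat \<Rightarrow> real)" where
  "sc n c x = (\<lambda>i\<in>{..<n}. c * x i)"

lemma space_lebn: "space (lebn n) = Rn n"
  by (simp add: lebn_def Rn_def space_PiM)

lemma sets_lebn_cong: "sets (lebn n) = sets (PiM {..<n} (\<lambda>_. borel))"
  unfolding lebn_def by (intro sets_PiM_cong) auto

lemma sc_meas[measurable]: "sc n c \<in> measurable (lebn n) (lebn n)"
  unfolding sc_def lebn_def
  by (intro measurable_restrict) (auto intro: measurable_component_singleton)

lemma sc_in_Rn: "sc n c x \<in> Rn n"
  by (simp add: sc_def Rn_def)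

lemma product_sigma_finite_lborel: "product_sigma_finite (\<lambda>_::nat. lborel :: real measure)"
  by (simp add: product_sigma_finite_def lborel.sigma_finite_measure_axioms)

lemma lborel_mult_preimage:
  assumes "c \<noteq> 0" "A \<in> sets borel"
  shows "emeasure lborel ((\<lambda>t::real. c * t) -` A) = ennreal (1 / \<bar>c\<bar>) * emeasure lborel A"
proof -
  have "emeasure lborel ((\<lambda>t::real. c * t) -` A) = emeasure (distr lborel borel ((*) c)) A"
    using assms by (simp add: emeasure_distr)
  also have "\<dots> = emeasure (density lborel (\<lambda>_. inverse \<bar>c\<bar>)) A"
    using assms by (simp add: lborel_distr_mult)
  also have "\<dots> = ennreal (1 / \<bar>c\<bar>) * emeasure lborel A"
    using assms by (simp add: emeasure_density nn_integral_cmult_indicator inverse_eq_divide)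
  finally show ?thesis .
qed

lemma lebn_dilate:
  assumes c: "c > 0"
  shows "density (distr (lebn n) (lebn n) (sc n c)) (\<lambda>_. ennreal (c ^ n)) = lebn n"
  unfolding lebn_def
proof (rule product_sigma_finite.PiM_eqI)
  show "product_sigma_finite (\<lambda>_. lborel :: real measure)" by (simp add: product_sigma_finite_def lborel.sigma_finite_measure_axioms)
  show "finite {..<n}" by simp
  show "sets (density (distr (Pi\<^sub>M {..<n} (\<lambda>_. lborel)) (Pi\<^sub>M {..<n} (\<lambda>_. lborel)) (sc n c)) (\<lambda>_. ennreal (c ^ n))) =
    sets (Pi\<^sub>M {..<n} (\<lambda>_. lborel))" by simp
  fix A assume A: "\<And>i. i \<in> {..<n} \<Longrightarrow> A i \<in> sets (lborel::real measure)"
  have AP: "Pi\<^sub>E {..<n} A \<in> sets (Pi\<^sub>M {..<n} (\<lambda>_. lborel::real measure))"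
    using A by (intro sets_PiM_I_finite) auto
  have pre: "sc n c -` Pi\<^sub>E {..<n} A \<inter> space (Pi\<^sub>M {..<n} (\<lambda>_. lborel)) = Pi\<^sub>E {..<n} (\<lambda>i. (\<lambda>t. c * t) -` A i)"
    by (auto simp: sc_def space_PiM PiE_iff)
  have scm: "sc n c \<in> measurable (Pi\<^sub>M {..<n} (\<lambda>_. lborel)) (Pi\<^sub>M {..<n} (\<lambda>_. lborel))"
    using sc_meas[of n c] by (simp add: lebn_def)
  have "emeasure (density (distr (Pi\<^sub>M {..<n} (\<lambda>_. lborel)) (Pi\<^sub>M {..<n} (\<lambda>_. lborel)) (sc n c)) (\<lambda>_. ennreal (c ^ n))) (Pi\<^sub>E {..<n} A)
     = ennreal (c ^ n) * emeasure (distr (Pi\<^sub>M {..<n} (\<lambda>_. lborel)) (Pi\<^sub>M {..<n} (\<lambda>_. lborel)) (sc n c)) (Pi\<^sub>E {..<n} A)"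
    using AP by (simp add: emeasure_density nn_integral_cmult_indicator)
  also have "\<dots> = ennreal (c ^ n) * emeasure (Pi\<^sub>M {..<n} (\<lambda>_. lborel)) (Pi\<^sub>E {..<n} (\<lambda>i. (\<lambda>t. c * t) -` A i))"
    using AP scm by (simp add: emeasure_distr pre)
  also have "\<dots> = ennreal (c ^ n) * (\<Prod>i<n. ennreal (1 / c) * emeasure lborel (A i))"
    using A c by (subst product_sigma_finite.emeasure_PiM[OF product_sigma_finite_lborel]) (auto intro!: prod.cong measurable_sets_borel[of "(*) c" borel] simp: lborel_mult_preimage)
  also have "\<dots> = (\<Prod>i<n. emeasure lborel (A i))"
    using c by (simp add: prod.distrib ennreal_power[symmetric] mult.assoc[symmetric] ennreal_mult[symmetric] power_mult_distrib[symmetric])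
  finally show "emeasure (density (distr (Pi\<^sub>M {..<n} (\<lambda>_. lborel)) (Pi\<^sub>M {..<n} (\<lambda>_. lborel)) (sc n c)) (\<lambda>_. ennreal (c ^ n))) (Pi\<^sub>E {..<n} A)
     = (\<Prod>i<n. emeasure lborel (A i))" .
qed

lemma nn_integral_dilate:
  assumes c: "c > 0" and u[measurable]: "u \<in> borel_measurable (lebn n)"
  shows "(\<integral>\<^sup>+x. u x \<partial>lebn n) = ennreal (c ^ n) * (\<integral>\<^sup>+x. u (sc n c x) \<partial>lebn n)"
proof -
  have "(\<integral>\<^sup>+x. u x \<partial>lebn n) = (\<integral>\<^sup>+x. u x \<partial>density (distr (lebn n) (lebn n) (sc n c)) (\<lambda>_. ennreal (c ^ n)))"
    by (simp add: lebn_dilate[OF c])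
  also have "\<dots> = (\<integral>\<^sup>+x. ennreal (c ^ n) * u x \<partial>distr (lebn n) (lebn n) (sc n c))"
    by (subst nn_integral_density) auto
  also have "\<dots> = (\<integral>\<^sup>+x. ennreal (c ^ n) * u (sc n c x) \<partial>lebn n)"
    by (subst nn_integral_distr) auto
  also have "\<dots> = ennreal (c ^ n) * (\<integral>\<^sup>+x. u (sc n c x) \<partial>lebn n)"
    by (subst nn_integral_cmult) auto
  finally show ?thesis .
qed

definition lc1 :: "(real \<Rightarrow> real) \<Rightarrow> bool" where
  "lc1 g \<longleftrightarrow> (\<forall>s. g s \<ge> 0) \<and> (\<forall>a b l. 0 < l \<and> l < 1 \<longrightarrow> g (l*a + (1-l)*b) \<ge> g a powr l * g b powr (1-l))"

definition hh :: "real \<Rightarrow> real" where "hh x = x - 1 - ln x"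

lemma lc1_ln:
  assumes "lc1 g" "0 < l" "l < 1" "g a > 0" "g b > 0"
  shows "g (l*a + (1-l)*b) > 0" "ln (g (l*a + (1-l)*b)) \<ge> l * ln (g a) + (1-l) * ln (g b)"
proof -
  have le: "g (l*a + (1-l)*b) \<ge> g a powr l * g b powr (1-l)" using assms unfolding lc1_def by blast
  have pos: "g a powr l * g b powr (1-l) > 0" using assms by simp
  show "g (l*a + (1-l)*b) > 0" using le pos by linarith
  have "ln (g a powr l * g b powr (1-l)) \<le> ln (g (l*a + (1-l)*b))"
    using le pos by (subst ln_le_cancel_iff) auto
  moreover have "ln (g a powr l * g b powr (1-l)) = l * ln (g a) + (1-l) * ln (g b)"
    using assms by (simp add: ln_mult ln_powr)
  ultimately show "ln (g (l*a + (1-l)*b)) \<ge> l * ln (g a) + (1-l) * ln (g b)" by simp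
qed

lemma ln_diff_le: fixes a t :: real shows "0 < a \<Longrightarrow> 0 < t \<Longrightarrow> ln a - ln t \<le> (a - t) / t"
proof -
  assume "0 < a" "0 < t"
  have "ln (a / t) \<le> a / t - 1" using \<open>0<a\<close> \<open>0<t\<close> ln_le_minus_one[of "a/t"] by simp
  thus ?thesis using \<open>0<a\<close> \<open>0<t\<close> by (simp add: ln_div diff_divide_distrib)
qed

lemma comb_id: fixes a b t :: real shows "a \<noteq> b \<Longrightarrow> ((t-b)/(a-b))*a + (1 - (t-b)/(a-b))*b = t"
proof -
  assume "a \<noteq> b" hence d: "a - b \<noteq> 0" by simp
  have gen: "\<And>x::real. x*a + (1 - x)*b = b + x*(a-b)" by (simp add: algebra_simps)
  have "((t-b)/(a-b))*a + (1 - (t-b)/(a-b))*b = b + ((t-b)/(a-b))*(a-b)" by (rule gen)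
  also have "((t-b)/(a-b))*(a-b) = t - b" using d by simp
  finally show ?thesis by simp
qed

lemma L1:
  fixes k :: nat
  assumes g: "lc1 g" and at: "0 < a" "a < t" and lam: "1 \<le> q" and ga: "g a > 0"
    and H: "t^k * g t \<le> a^k * g a"
  shows "(q*t)^k * g (q*t) \<le> exp (- real k * hh q) * (t^k * g t)"
proof (cases "q = 1 \<or> g (q*t) = 0")
  case True
  then show ?thesis
  proof
    assume "q = 1" thus ?thesis by (simp add: hh_def)
  next
    assume "g (q*t) = 0"
    moreover have "g t \<ge> 0" using g by (simp add: lc1_def)
    ultimately show ?thesis using at by simp
  qed
next
  case False
  define b where "b = q*t"
  have lam1: "q > 1" using False lam by auto
  have tb: "t < b" using lam1 at by (simp add: b_def)
  have gb: "g b > 0" using False g by (auto simp: lc1_def b_def less_le)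
  define l where "l = (t - b)/(a - b)"
  have l0: "0 < l" "l < 1" using at tb by (auto simp: l_def zero_less_divide_iff divide_less_eq_1)
  have tl: "t = l*a + (1-l)*b" using comb_id[of a b t] at tb by (simp add: l_def)
  have gt: "g t > 0" and cc: "ln (g t) \<ge> l * ln (g a) + (1-l) * ln (g b)"
    using lc1_ln[OF g l0 ga gb] tl by auto
  have H': "k * ln t + ln (g t) \<le> k * ln a + ln (g a)"
  proof -
    have "ln (t^k * g t) \<le> ln (a^k * g a)" using H gt at ga by (subst ln_le_cancel_iff) auto
    thus ?thesis using gt at ga by (simp add: ln_mult ln_realpow)
  qed
  have lnat: "ln a - ln t \<le> (a - t)/t" using ln_diff_le at by auto
  have s1: "(1-l)*(ln (g b) - ln (g t)) \<le> l * (ln (g t) - ln (g a))" using cc by (simp add: algebra_simps)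
  have s2: "l * (ln (g t) - ln (g a)) \<le> l * (k * ((a - t)/t))"
  proof -
    have "ln (g t) - ln (g a) \<le> k * (ln a - ln t)" using H' by (simp add: algebra_simps)
    also have "\<dots> \<le> k * ((a - t)/t)" using lnat by (intro mult_left_mono) auto
    finally show ?thesis using l0 by (intro mult_left_mono) auto
  qed
  have "(1-l)*(ln (g b) - ln (g t)) \<le> l * (k * ((a - t)/t))" using s1 s2 by linarith
  hence "((1-l)*(ln (g b) - ln (g t)))*(b-a) \<le> (l * (k * ((a - t)/t)))*(b-a)"
    using at tb by (intro mult_right_mono) auto
  moreover have "l*(b-a) = b - t" "(1-l)*(b-a) = t - a" using at tb
    by (auto simp: l_def divide_simps) (auto simp: algebra_simps)
  moreover have "((1-l)*(ln (g b) - ln (g t)))*(b-a) = ((1-l)*(b-a))*(ln (g b) - ln (g t))"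
     "(l * (k * ((a - t)/t)))*(b-a) = (l*(b-a)) * (k * ((a - t)/t))" by (metis mult.assoc mult.commute)+
  ultimately have "(t-a)*(ln (g b) - ln (g t)) \<le> (b-t) * (k * ((a - t)/t))"
    by metis
  moreover have "(b-t) * (k * ((a - t)/t)) = (t-a) * (- k * (q - 1))"
    using at by (simp add: b_def field_simps)
  ultimately have "(t-a)*(ln (g b) - ln (g t)) \<le> (t-a) * (- k * (q - 1))" by simp
  hence key: "ln (g b) - ln (g t) \<le> - k * (q - 1)"
    by (rule mult_left_le_imp_le) (use at in simp)
  have "ln ((q*t)^k * g (q*t)) = k * ln q + k * ln t + ln (g b)"
    using at lam1 gb by (simp add: ln_mult ln_realpow b_def algebra_simps)
  also have "\<dots> \<le> - k * hh q + (k * ln t + ln (g t))"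
    using key by (simp add: hh_def algebra_simps)
  also have "\<dots> = ln (exp (- real k * hh q) * (t^k * g t))"
    using at gt by (simp add: ln_mult ln_realpow)
  finally show ?thesis using at gt gb lam1
    by (subst (asm) ln_le_cancel_iff) (auto simp: b_def)
qed

lemma L2:
  fixes k :: nat
  assumes g: "lc1 g" and at: "0 < t" "t < a" and lam: "0 < q" "q \<le> 1" and ga: "g a > 0"
    and H: "t^k * g t \<le> a^k * g a"
  shows "(q*t)^k * g (q*t) \<le> exp (- real k * hh q) * (t^k * g t)"
proof (cases "q = 1 \<or> g (q*t) = 0")
  case True
  then show ?thesis
  proof
    assume "q = 1" thus ?thesis by (simp add: hh_def)
  next
    assume "g (q*t) = 0"
    moreover have "g t \<ge> 0" using g by (simp add: lc1_def)
    ultimately show ?thesis using at lam by simp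
  qed
next
  case False
  define b where "b = q*t"
  have lam1: "q < 1" using False lam by auto
  have tb: "b < t" "0 < b" using lam1 lam at by (auto simp: b_def)
  have gb: "g b > 0" using False g by (auto simp: lc1_def b_def less_le)
  define l where "l = (t - b)/(a - b)"
  have l0: "0 < l" "l < 1" using at tb by (auto simp: l_def zero_less_divide_iff divide_less_eq_1)
  have tl: "t = l*a + (1-l)*b" using comb_id[of a b t] at tb by (simp add: l_def)
  have gt: "g t > 0" and cc: "ln (g t) \<ge> l * ln (g a) + (1-l) * ln (g b)"
    using lc1_ln[OF g l0 ga gb] tl by auto
  have H': "k * ln t + ln (g t) \<le> k * ln a + ln (g a)"
  proof -
    have "ln (t^k * g t) \<le> ln (a^k * g a)" using H gt at ga by (subst ln_le_cancel_iff) auto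
    thus ?thesis using gt at ga by (simp add: ln_mult ln_realpow)
  qed
  have lnat: "ln a - ln t \<le> (a - t)/t" using ln_diff_le at by auto
  have s1: "(1-l)*(ln (g b) - ln (g t)) \<le> l * (ln (g t) - ln (g a))" using cc by (simp add: algebra_simps)
  have s2: "l * (ln (g t) - ln (g a)) \<le> l * (k * ((a - t)/t))"
  proof -
    have "ln (g t) - ln (g a) \<le> k * (ln a - ln t)" using H' by (simp add: algebra_simps)
    also have "\<dots> \<le> k * ((a - t)/t)" using lnat by (intro mult_left_mono) auto
    finally show ?thesis using l0 by (intro mult_left_mono) auto
  qed
  have "(1-l)*(ln (g b) - ln (g t)) \<le> l * (k * ((a - t)/t))" using s1 s2 by linarith
  hence "((1-l)*(ln (g b) - ln (g t)))*(a-b) \<le> (l * (k * ((a - t)/t)))*(a-b)"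
    using at tb by (intro mult_right_mono) auto
  moreover have "l*(a-b) = t - b" "(1-l)*(a-b) = a - t" using at tb
    by (auto simp: l_def divide_simps algebra_simps)
  moreover have "((1-l)*(ln (g b) - ln (g t)))*(a-b) = ((1-l)*(a-b))*(ln (g b) - ln (g t))"
     "(l * (k * ((a - t)/t)))*(a-b) = (l*(a-b)) * (k * ((a - t)/t))" by (metis mult.assoc mult.commute)+
  ultimately have "(a-t)*(ln (g b) - ln (g t)) \<le> (t-b) * (k * ((a - t)/t))"
    by metis
  moreover have "(t-b) * (k * ((a - t)/t)) = (a-t) * (k * (1 - q))"
    using at by (simp add: b_def field_simps)
  ultimately have "(a-t)*(ln (g b) - ln (g t)) \<le> (a-t) * (k * (1 - q))" by simp
  hence key: "ln (g b) - ln (g t) \<le> k * (1 - q)"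
    by (rule mult_left_le_imp_le) (use at in simp)
  have "ln ((q*t)^k * g (q*t)) = k * ln q + k * ln t + ln (g b)"
    using at lam gb by (simp add: ln_mult ln_realpow b_def algebra_simps)
  also have "\<dots> \<le> - k * hh q + (k * ln t + ln (g t))"
    using key by (simp add: hh_def algebra_simps)
  also have "\<dots> = ln (exp (- real k * hh q) * (t^k * g t))"
    using at gt by (simp add: ln_mult ln_realpow)
  finally show ?thesis using at gt gb lam
    by (subst (asm) ln_le_cancel_iff) (auto simp: b_def)
qed

lemma unimodal:
  fixes k :: nat
  assumes g: "lc1 g" and abc: "0 < a" "a < b" "b \<le> c"
    and lt: "b^k * g b < a^k * g a"
  shows "c^k * g c \<le> a^k * g a"
proof (rule ccontr)
  assume "\<not> ?thesis"
  hence gt: "c^k * g c > a^k * g a" by simp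
  have g0: "\<And>s. g s \<ge> 0" using g by (simp add: lc1_def)
  have bc: "b < c" using gt lt abc by (cases "b = c") auto
  have gb0: "b^k * g b \<ge> 0" using g0 abc by simp
  have ga: "g a > 0" using lt gb0 abc by (metis less_le_trans mult_eq_0_iff not_less_iff_gr_or_eq zero_less_mult_pos zero_less_power g0 order.not_eq_order_implies_strict)
  have "0 < a^k * g a" by (rule mult_pos_pos) (use ga abc in auto)
  hence "c^k * g c > 0" by (rule less_trans[OF _ gt])
  hence gc: "g c > 0" using abc by (simp add: zero_less_mult_iff)
  define l where "l = (b - c)/(a - c)"
  have l0: "0 < l" "l < 1" using abc bc by (auto simp: l_def zero_less_divide_iff divide_less_eq_1)
  have bl: "b = l*a + (1-l)*c" using comb_id[of a c b] abc bc by (simp add: l_def)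
  have gbp: "g b > 0" and cc: "ln (g b) \<ge> l * ln (g a) + (1-l) * ln (g c)"
    using lc1_ln[OF g l0 ga gc] bl by auto
  have lnb: "ln b \<ge> l * ln a + (1-l) * ln c"
  proof -
    have "ln a - ln b \<le> (a - b)/b" "ln c - ln b \<le> (c - b)/b" using ln_diff_le abc bc by auto
    hence "l*(ln a - ln b) + (1-l)*(ln c - ln b) \<le> l*((a - b)/b) + (1-l)*((c - b)/b)"
      using l0 by (intro add_mono mult_left_mono) auto
    also have "\<dots> = 0" using abc bl by (simp add: field_simps)
    finally show ?thesis by (simp add: algebra_simps)
  qed
  have "ln (a^k * g a) < ln (c^k * g c)" using gt ga gc abc bc by (subst ln_less_cancel_iff) auto
  hence A: "k * ln a + ln (g a) < k * ln c + ln (g c)" using ga gc abc bc by (simp add: ln_mult ln_realpow)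
  have "ln (b^k * g b) < ln (a^k * g a)" using lt ga gbp abc by (subst ln_less_cancel_iff) auto
  hence B: "k * ln b + ln (g b) < k * ln a + ln (g a)" using ga gbp abc by (simp add: ln_mult ln_realpow)
  have "k * ln b \<ge> k * (l * ln a + (1-l) * ln c)" using lnb by (intro mult_left_mono) auto
  hence "k * ln b + ln (g b) \<ge> l * (k * ln a + ln (g a)) + (1-l) * (k * ln c + ln (g c))"
    using cc by (simp add: algebra_simps)
  moreover have "l * (k * ln a + ln (g a)) + (1-l) * (k * ln c + ln (g c)) \<ge> k * ln a + ln (g a)"
  proof -
    have "(1-l)*((k * ln c + ln (g c)) - (k * ln a + ln (g a))) \<ge> 0"
      using A l0 by (intro mult_nonneg_nonneg) auto
    thus ?thesis by (simp add: algebra_simps)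
  qed
  ultimately show False using B by linarith
qed

lemma hh_lower1:
  assumes "0 < q" "q \<le> 1" shows "(1-q)^2/2 \<le> hh q"
proof -
  define p where "p x = - (x - 1 - ln x - (1-x)^2/2)" for x :: real
  have "p q \<le> p 1"
  proof (rule DERIV_nonneg_imp_nondecreasing[OF assms(2)])
    fix x assume x: "q \<le> x" "x \<le> 1"
    hence x0: "x > 0" using assms by auto
    have "(p has_real_derivative (- (1 - 1/x + (1 - x)))) (at x)"
      unfolding p_def using x0 by (auto intro!: derivative_eq_intros simp: field_simps power2_eq_square)
    moreover have "- (1 - 1/x + (1 - x)) \<ge> 0"
    proof -
      have "1 - 1/x + (1 - x) = - ((1-x)^2 / x)" using x0 by (simp add: field_simps power2_eq_square)
      thus ?thesis using x0 by simp
    qed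
    ultimately show "\<exists>y. (p has_real_derivative y) (at x) \<and> 0 \<le> y" by blast
  qed
  thus ?thesis by (simp add: p_def hh_def)
qed

lemma hh_lower2:
  assumes "1 \<le> q" shows "(q-1)^2/(2*q) \<le> hh q"
proof -
  define p where "p x = x - 1 - ln x - (x-1)^2/(2*x)" for x :: real
  have "p 1 \<le> p q"
  proof (rule DERIV_nonneg_imp_nondecreasing[OF assms])
    fix x assume x: "1 \<le> x" "x \<le> q"
    hence x0: "x > 0" using assms by auto
    have "(p has_real_derivative ((x-1)^2/(2*x^2))) (at x)"
      unfolding p_def using x0
      by (auto intro!: derivative_eq_intros simp: field_simps power2_eq_square)
    moreover have "(x-1)^2/(2*x^2) \<ge> 0" by simp
    ultimately show "\<exists>y. (p has_real_derivative y) (at x) \<and> 0 \<le> y" by blast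
  qed
  thus ?thesis by (simp add: p_def hh_def)
qed

lemma hh_nonneg: "0 < q \<Longrightarrow> hh q \<ge> 0"
  using ln_le_minus_one[of q] by (simp add: hh_def)

lemma exp_ge_sq4: "x \<ge> 0 \<Longrightarrow> x^2/4 \<le> exp (x::real)"
proof -
  assume x: "x \<ge> 0"
  have "x/2 \<le> 1 + x/2" by simp
  also have "\<dots> \<le> exp (x/2)" by (rule exp_ge_add_one_self)
  finally have "(x/2)^2 \<le> exp (x/2) ^ 2" using x by (intro power_mono) auto
  also have "exp (x/2)^2 = exp x" by (simp add: exp_double[symmetric])
  finally show ?thesis by (simp add: power_divide)
qed

lemma geom_exp_sum: "(\<Sum>j=1..J. exp (- real j)) \<le> 1"
proof -
  have e: "exp (-1::real) \<le> 1/2"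
  proof -
    have "2 \<le> exp (1::real)" using exp_ge_add_one_self[of 1] by simp
    thus ?thesis by (simp add: exp_minus field_simps)
  qed
  have "(\<Sum>j=1..J. exp (- real j)) = (\<Sum>j=1..J. (exp (-1)) ^ j)"
    by (intro sum.cong) (auto simp: exp_of_nat_mult[symmetric])
  also have "\<dots> = exp (-1) * (\<Sum>i<J. (exp (-1)) ^ i)"
    by (induction J) (auto simp: algebra_simps)
  also have "\<dots> \<le> (1/2) * (1/(1 - exp (-1)))"
  proof -
    have "exp (-1::real) < 1" by simp
    hence "(\<Sum>i<J. (exp (-1::real)) ^ i) < 1/(1 - exp (-1))"
      by (intro geometric_sum_less) auto
    moreover have "(\<Sum>i<J. (exp (-1::real)) ^ i) \<ge> 0" by (intro sum_nonneg) auto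
    ultimately show ?thesis using e by (intro mult_mono) auto
  qed
  also have "(1/2) * (1/(1 - exp (-1::real))) \<le> 1"
    using e by (simp add: field_simps)
  finally show ?thesis by simp
qed

lemma enorm_sc: "enorm n (sc n c x) = \<bar>c\<bar> * enorm n x"
proof -
  have "(\<Sum>i<n. (sc n c x i)\<^sup>2) = c^2 * (\<Sum>i<n. (x i)\<^sup>2)"
    by (simp add: sc_def sum_distrib_left power_mult_distrib)
  thus ?thesis by (simp add: enorm_def real_sqrt_mult)
qed

lemma enorm_nonneg: "enorm n x \<ge> 0"
  by (simp add: enorm_def sum_nonneg)

lemma sc_sc: "sc n c (sc n d x) = sc n (c*d) x"
  by (auto simp: sc_def fun_eq_iff)

lemma sc_one: "x \<in> Rn n \<Longrightarrow> sc n 1 x = x"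
  by (auto simp: sc_def Rn_def fun_eq_iff PiE_iff extensional_def)

lemma ccomb_sc: "ccomb n l (sc n a x) (sc n b x) = sc n (l*a + (1-l)*b) x"
  by (auto simp: sc_def ccomb_def fun_eq_iff algebra_simps)

lemma lc1_ray:
  assumes "log_concave n f"
  shows "lc1 (\<lambda>s. f (sc n s x))"
  unfolding lc1_def
proof safe
  fix s show "f (sc n s x) \<ge> 0" using assms sc_in_Rn by (auto simp: log_concave_def)
next
  fix a b l :: real assume "0 < l" "l < 1"
  thus "f (sc n a x) powr l * f (sc n b x) powr (1 - l) \<le> f (sc n (l * a + (1 - l) * b) x)"
    using assms sc_in_Rn[of n] by (auto simp: log_concave_def ccomb_sc[symmetric])
qed

lemma enorm_meas[measurable]: "enorm n \<in> borel_measurable (lebn n)"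
  unfolding enorm_def lebn_def by measurable

definition e0 :: "nat \<Rightarrow> nat \<Rightarrow> real" where "e0 n = (\<lambda>i\<in>{..<n}. if i = 0 then 1 else 0)"

lemma e0_Rn: "e0 n \<in> Rn n" by (simp add: e0_def Rn_def)

lemma enorm_e0: "n \<ge> 1 \<Longrightarrow> enorm n (e0 n) = 1"
proof -
  assume "n \<ge> 1"
  have "(\<Sum>i<n. (e0 n i)\<^sup>2) = (\<Sum>i<n. if i = 0 then 1 else 0)"
    by (intro sum.cong) (auto simp: e0_def)
  also have "\<dots> = 1" using \<open>n \<ge> 1\<close> by simp
  finally show ?thesis by (simp add: enorm_def)
qed

lemma null_zero:
  assumes "n \<ge> 1"
  shows "AE x in lebn n. enorm n x \<noteq> 0"
proof (rule AE_I')
  show "{x \<in> space (lebn n). \<not> enorm n x \<noteq> 0} \<subseteq> {x \<in> space (lebn n). enorm n x = 0}" by auto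
  show "{x \<in> space (lebn n). enorm n x = 0} \<in> null_sets (lebn n)"
  proof -
    have "{x \<in> space (lebn n). enorm n x = 0} = Pi\<^sub>E {..<n} (\<lambda>_. {0})"
    proof (intro equalityI subsetI)
      fix x assume "x \<in> {x \<in> space (lebn n). enorm n x = 0}"
      hence x: "x \<in> space (lebn n)" "enorm n x = 0" by auto
      hence "(\<Sum>i<n. (x i)\<^sup>2) = 0" by (simp add: enorm_def)
      hence "\<forall>i\<in>{..<n}. (x i)\<^sup>2 = 0" by (subst (asm) sum_nonneg_eq_0_iff) auto
      thus "x \<in> Pi\<^sub>E {..<n} (\<lambda>_. {0})" using x by (auto simp: space_lebn Rn_def PiE_iff extensional_def fun_eq_iff)
    next
      fix x assume "x \<in> Pi\<^sub>E {..<n} (\<lambda>_. {0::real})"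
      thus "x \<in> {x \<in> space (lebn n). enorm n x = 0}" by (auto simp: space_lebn Rn_def PiE_iff enorm_def)
    qed
    moreover have "emeasure (lebn n) (Pi\<^sub>E {..<n} (\<lambda>_. {0})) = 0"
      unfolding lebn_def using assms
      by (subst product_sigma_finite.emeasure_PiM[OF product_sigma_finite_lborel]) (auto simp: prod_zero_iff)
    moreover have "Pi\<^sub>E {..<n} (\<lambda>_. {0::real}) \<in> sets (lebn n)"
      unfolding lebn_def by (intro sets_PiM_I_finite) auto
    ultimately show ?thesis by (simp add: null_sets_def)
  qed
qed

locale LC =
  fixes n :: nat and f :: "(nat \<Rightarrow> real) \<Rightarrow> real" and \<delta> :: real
  assumes n2: "n \<ge> 2" and lcf: "log_concave n f" and fm[measurable]: "f \<in> borel_measurable (lebn n)"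
  and fint: "integrable (lebn n) f" and f1: "integral\<^sup>L (lebn n) f = 1"
  and fcont: "continuous_on (Rn n) f"
  and sym: "\<forall>x1\<in>Rn n. \<forall>x2\<in>Rn n. enorm n x1 = enorm n x2 \<and> enorm n x1 \<le> 10 * sqrt (real n) \<longrightarrow>
           f x1 > 0 \<and> f x2 > 0 \<and> \<bar>ln (f x1) - ln (f x2)\<bar> \<le> \<delta> * real n"
begin

definition "TT = 10 * sqrt (real n)"
definition "k = n - 1"
definition "g0 s = f (sc n s (e0 n))"
definition "G0 s = s ^ k * g0 s"

lemma n_k: "n = Suc k" using n2 by (simp add: k_def)
lemma k1: "k \<ge> 1" using n2 by (simp add: k_def)

lemma TT_pos: "TT > 0" using n2 by (simp add: TT_def)

lemma f_nonneg: "x \<in> Rn n \<Longrightarrow> f x \<ge> 0"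
  using lcf by (simp add: log_concave_def)

lemma f_nonneg': "f (sc n s x) \<ge> 0"
  using f_nonneg sc_in_Rn by blast

lemma enorm_sce0: "s \<ge> 0 \<Longrightarrow> enorm n (sc n s (e0 n)) = s"
  using enorm_e0[of n] n2 by (simp add: enorm_sc)

lemma f_pos: "x \<in> Rn n \<Longrightarrow> enorm n x \<le> TT \<Longrightarrow> f x > 0"
proof -
  assume "x \<in> Rn n" "enorm n x \<le> TT"
  thus "f x > 0" using sym unfolding TT_def by blast
qed

lemma sym_le:
  assumes x: "x \<in> Rn n" "enorm n x \<le> TT"
  shows "f x \<le> exp (\<delta> * n) * g0 (enorm n x)" "g0 (enorm n x) \<le> exp (\<delta> * n) * f x"
proof -
  let ?y = "sc n (enorm n x) (e0 n)"
  have y: "?y \<in> Rn n" "enorm n ?y = enorm n x" using sc_in_Rn enorm_sce0 enorm_nonneg by auto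
  have H: "f x > 0 \<and> f ?y > 0 \<and> \<bar>ln (f x) - ln (f ?y)\<bar> \<le> \<delta> * n"
    using sym x y unfolding TT_def by (metis (no_types, lifting))
  hence a: "ln (f x) \<le> \<delta> * n + ln (f ?y)" "ln (f ?y) \<le> \<delta> * n + ln (f x)" by auto
  have "f x = exp (ln (f x))" using H by simp
  also have "\<dots> \<le> exp (\<delta> * n + ln (f ?y))" using a by simp
  also have "\<dots> = exp (\<delta> * n) * f ?y" using H by (simp add: exp_add)
  finally show "f x \<le> exp (\<delta> * n) * g0 (enorm n x)" by (simp add: g0_def)
  have "f ?y = exp (ln (f ?y))" using H by simp
  also have "\<dots> \<le> exp (\<delta> * n + ln (f x))" using a by simp
  also have "\<dots> = exp (\<delta> * n) * f x" using H by (simp add: exp_add)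
  finally show "g0 (enorm n x) \<le> exp (\<delta> * n) * f x" by (simp add: g0_def)
qed

lemma g0_pos: "0 \<le> s \<Longrightarrow> s \<le> TT \<Longrightarrow> g0 s > 0"
  unfolding g0_def using f_pos sc_in_Rn enorm_sce0 by simp

lemma g0_lc1: "lc1 g0"
  unfolding g0_def by (rule lc1_ray[OF lcf])

lemma cont_sce0: "continuous_on UNIV (\<lambda>s. sc n s (e0 n))"
  unfolding sc_def
proof (intro continuous_on_coordinatewise_then_product)
  fix i
  show "continuous_on UNIV (\<lambda>s. (\<lambda>i\<in>{..<n}. s * e0 n i) i)"
    by (cases "i < n") (auto intro!: continuous_intros)
qed

lemma G0_cont: "continuous_on {0..TT} G0"
proof -
  have "continuous_on {0..TT} (\<lambda>s. f (sc n s (e0 n)))"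
    by (rule continuous_on_compose2[OF fcont continuous_on_subset[OF cont_sce0]]) (auto simp: sc_in_Rn)
  thus ?thesis unfolding G0_def g0_def by (intro continuous_intros) auto
qed

lemma m_exists: "\<exists>m. 0 < m \<and> m \<le> TT \<and> (\<forall>t\<in>{0..TT}. G0 t \<le> G0 m)"
proof -
  obtain m where m: "m \<in> {0..TT}" "\<forall>t\<in>{0..TT}. G0 t \<le> G0 m"
    using continuous_attains_sup[OF compact_Icc _ G0_cont] TT_pos by auto
  have "G0 TT > 0" using g0_pos TT_pos by (simp add: G0_def)
  moreover have "G0 0 = 0" using k1 by (simp add: G0_def)
  ultimately have "m \<noteq> 0" using m(2) TT_pos
    by (metis atLeastAtMost_iff less_eq_real_def not_le)
  hence "0 < m" using m(1) by auto
  thus ?thesis using m by (intro exI[of _ m]) auto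
qed

definition "mm = (SOME m. 0 < m \<and> m \<le> TT \<and> (\<forall>t\<in>{0..TT}. G0 t \<le> G0 m))"

lemma mm: "0 < mm" "mm \<le> TT" "\<And>t. 0 \<le> t \<Longrightarrow> t \<le> TT \<Longrightarrow> G0 t \<le> G0 mm"
  using someI_ex[OF m_exists] unfolding mm_def[symmetric] by auto

end

context LC begin

lemma PL:
  assumes x: "x \<in> Rn n" "0 < enorm n x" "enorm n x < mm" and q: "0 < q" "q \<le> 1"
  shows "q^n * f (sc n q x) \<le> q * (exp (2*\<delta>*n) * exp (- real k * hh q)) * f x"
proof -
  define t where "t = enorm n x"
  have t: "0 < t" "t < mm" "t \<le> TT" using x mm by (auto simp: t_def)
  have qt: "enorm n (sc n q x) = q * t" using q by (simp add: enorm_sc t_def)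
  have "q*t \<le> t" by (rule mult_left_le_one_le) (use q t in auto)
  hence qtT: "q*t \<le> TT" using t by linarith
  have a1: "f (sc n q x) \<le> exp (\<delta> * n) * g0 (q*t)"
    using sym_le(1)[of "sc n q x"] qt qtT sc_in_Rn by simp
  have a2: "(q*t)^k * g0 (q*t) \<le> exp (- real k * hh q) * (t^k * g0 t)"
    using L2[OF g0_lc1 t(1) t(2) q g0_pos[OF _ mm(2)]] mm(1) mm(3)[of t] t by (simp add: G0_def)
  have a3: "g0 t \<le> exp (\<delta> * n) * f x" using sym_le(2)[OF x(1)] t by (simp add: t_def)
  have "(q*t)^k * f (sc n q x) \<le> (q*t)^k * (exp (\<delta> * n) * g0 (q*t))"
    using a1 q t by (intro mult_left_mono) auto
  also have "\<dots> = exp (\<delta> * n) * ((q*t)^k * g0 (q*t))" by simp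
  also have "\<dots> \<le> exp (\<delta> * n) * (exp (- real k * hh q) * (t^k * g0 t))"
    using a2 by (intro mult_left_mono) auto
  also have "\<dots> \<le> exp (\<delta> * n) * (exp (- real k * hh q) * (t^k * (exp (\<delta> * n) * f x)))"
    using a3 t by (intro mult_left_mono) auto
  also have "\<dots> = t^k * (exp (2*\<delta>*n) * exp (- real k * hh q) * f x)"
    by (simp add: exp_add[symmetric] algebra_simps)
  finally have "t^k * (q^k * f (sc n q x)) \<le> t^k * (exp (2*\<delta>*n) * exp (- real k * hh q) * f x)"
    by (simp add: power_mult_distrib algebra_simps)
  hence "q^k * f (sc n q x) \<le> exp (2*\<delta>*n) * exp (- real k * hh q) * f x"
    using t by (simp add: mult_le_cancel_left_pos)
  hence "q * (q^k * f (sc n q x)) \<le> q * (exp (2*\<delta>*n) * exp (- real k * hh q) * f x)"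
    using q by (intro mult_left_mono) auto
  moreover have "q^n * f (sc n q x) = q * (q^k * f (sc n q x))" by (metis n_k power_Suc mult.assoc)
  ultimately show ?thesis by (metis mult.assoc)
qed

lemma PU:
  assumes x: "x \<in> Rn n" "mm < enorm n x" and q: "1 \<le> q" "q * enorm n x \<le> TT"
  shows "q^n * f (sc n q x) \<le> q * (exp (2*\<delta>*n) * exp (- real k * hh q)) * f x"
proof -
  define t where "t = enorm n x"
  have "1 * enorm n x \<le> q * enorm n x" by (rule mult_right_mono) (use q enorm_nonneg in auto)
  hence "enorm n x \<le> TT" using q by linarith
  hence t: "0 < t" "mm < t" "t \<le> TT" using x mm by (auto simp: t_def)
  have qt: "enorm n (sc n q x) = q * t" using q by (simp add: enorm_sc t_def)
  have qtT: "q*t \<le> TT" using q by (simp add: t_def)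
  have a1: "f (sc n q x) \<le> exp (\<delta> * n) * g0 (q*t)"
    using sym_le(1)[of "sc n q x"] qt qtT sc_in_Rn by simp
  have a2: "(q*t)^k * g0 (q*t) \<le> exp (- real k * hh q) * (t^k * g0 t)"
    using L1[OF g0_lc1 mm(1) t(2) q(1) g0_pos[OF _ mm(2)]] mm(1) mm(3)[of t] t by (simp add: G0_def)
  have a3: "g0 t \<le> exp (\<delta> * n) * f x" using sym_le(2)[OF x(1)] t by (simp add: t_def)
  have "(q*t)^k * f (sc n q x) \<le> (q*t)^k * (exp (\<delta> * n) * g0 (q*t))"
    using a1 q t by (intro mult_left_mono) auto
  also have "\<dots> = exp (\<delta> * n) * ((q*t)^k * g0 (q*t))" by simp
  also have "\<dots> \<le> exp (\<delta> * n) * (exp (- real k * hh q) * (t^k * g0 t))"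
    using a2 by (intro mult_left_mono) auto
  also have "\<dots> \<le> exp (\<delta> * n) * (exp (- real k * hh q) * (t^k * (exp (\<delta> * n) * f x)))"
    using a3 t by (intro mult_left_mono) auto
  also have "\<dots> = t^k * (exp (2*\<delta>*n) * exp (- real k * hh q) * f x)"
    by (simp add: exp_add[symmetric] algebra_simps)
  finally have "t^k * (q^k * f (sc n q x)) \<le> t^k * (exp (2*\<delta>*n) * exp (- real k * hh q) * f x)"
    by (simp add: power_mult_distrib algebra_simps)
  hence "q^k * f (sc n q x) \<le> exp (2*\<delta>*n) * exp (- real k * hh q) * f x"
    using t by (simp add: mult_le_cancel_left_pos)
  hence "q * (q^k * f (sc n q x)) \<le> q * (exp (2*\<delta>*n) * exp (- real k * hh q) * f x)"
    using q by (intro mult_left_mono) auto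
  moreover have "q^n * f (sc n q x) = q * (q^k * f (sc n q x))" by (metis n_k power_Suc mult.assoc)
  ultimately show ?thesis by (metis mult.assoc)
qed

end

context LC begin

lemma PF:
  assumes small: "8 * \<delta> * n < k" and mT: "mm < TT/4"
    and x: "x \<in> Rn n" "TT/2 \<le> enorm n x"
  shows "2^n * f (sc n 2 x) \<le> 2 * exp (- real k / 4) * f x"
proof -
  define s where "s = enorm n x"
  have s: "0 < s" "TT/2 \<le> s" using x TT_pos by (auto simp: s_def)
  define r where "r u = f (sc n u x)" for u
  have rlc: "lc1 r" unfolding r_def by (rule lc1_ray[OF lcf])
  define a where "a = mm / s"
  define b where "b = TT / (2 * s)"
  have ab: "0 < a" "a < b" "b \<le> 1" using mm s TT_pos mT by (auto simp: a_def b_def field_simps)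
  have na: "enorm n (sc n a x) = mm" using s ab mm(1) by (simp add: enorm_sc a_def s_def)
  have nb: "enorm n (sc n b x) = TT/2" using s ab TT_pos by (simp add: enorm_sc b_def s_def)
  have ra: "r a > 0" unfolding r_def using f_pos sc_in_Rn na mm by simp
  have hh2: "hh 2 \<ge> 1/4" using hh_lower2[of 2] by simp
  have e1: "f (sc n b x) \<le> exp (\<delta> * n) * g0 (TT/2)" using sym_le(1)[of "sc n b x"] nb sc_in_Rn TT_pos by simp
  have e2: "g0 mm \<le> exp (\<delta> * n) * f (sc n a x)" using sym_le(2)[of "sc n a x"] na sc_in_Rn mm by simp
  have e3: "(TT/2)^k * g0 (TT/2) \<le> exp (- real k * hh 2) * ((TT/4)^k * g0 (TT/4))"
  proof -
    have "(2*(TT/4))^k * g0 (2*(TT/4)) \<le> exp (- real k * hh 2) * ((TT/4)^k * g0 (TT/4))"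
      by (rule L1[OF g0_lc1 mm(1) mT _ g0_pos[OF _ mm(2)]]) (use mm(1) mm(3)[of "TT/4"] TT_pos in \<open>auto simp: G0_def\<close>)
    moreover have "2*(TT/4) = TT/2" by simp
    ultimately show ?thesis by simp
  qed
  have e4: "(TT/4)^k * g0 (TT/4) \<le> mm^k * g0 mm" using mm(3)[of "TT/4"] TT_pos by (simp add: G0_def)
  have ek: "exp (2*\<delta>*n) * exp (- real k * hh 2) < 1"
  proof -
    have "2*\<delta>*n - real k * hh 2 < 0"
    proof -
      have "real k * (1/4) \<le> real k * hh 2" using hh2 by (intro mult_left_mono) auto
      thus ?thesis using small by simp
    qed
    thus ?thesis by (simp add: exp_add[symmetric])
  qed
  have "s^k * (b^k * r b) = (TT/2)^k * f (sc n b x)"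
    using s by (simp add: r_def b_def power_mult_distrib[symmetric])
  also have "\<dots> \<le> (TT/2)^k * (exp (\<delta> * n) * g0 (TT/2))"
    using e1 TT_pos by (intro mult_left_mono) auto
  also have "\<dots> = exp (\<delta> * n) * ((TT/2)^k * g0 (TT/2))" by simp
  also have "\<dots> \<le> exp (\<delta> * n) * (exp (- real k * hh 2) * (mm^k * g0 mm))"
    using e3 e4 by (intro mult_left_mono order.trans[OF e3]) auto
  also have "\<dots> \<le> exp (\<delta> * n) * (exp (- real k * hh 2) * (mm^k * (exp (\<delta> * n) * f (sc n a x))))"
    using e2 mm by (intro mult_left_mono) auto
  also have "\<dots> = (exp (2*\<delta>*n) * exp (- real k * hh 2)) * (mm^k * f (sc n a x))"
    by (simp add: exp_add[symmetric] algebra_simps)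
  also have "\<dots> < mm^k * f (sc n a x)"
    using ek ra mm(1) by (simp add: r_def)
  also have "\<dots> = s^k * (a^k * r a)"
    using s by (simp add: r_def a_def power_mult_distrib[symmetric])
  finally have "b^k * r b < a^k * r a" using s by (simp add: mult_less_cancel_left_pos)
  hence "1^k * r 1 \<le> a^k * r a" using unimodal[OF rlc ab(1) ab(2) ab(3)] by simp
  hence "(2*1)^k * r (2*1) \<le> exp (- real k * hh 2) * (1^k * r 1)"
    using ab by (intro L1[OF rlc ab(1) _ _ ra]) auto
  hence "2^k * f (sc n 2 x) \<le> exp (- real k * hh 2) * f x"
    using x by (simp add: r_def sc_one)
  also have "\<dots> \<le> exp (- real k / 4) * f x"
  proof -
    have "real k * (1/4) \<le> real k * hh 2" using hh2 by (intro mult_left_mono) auto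
    hence "exp (- real k * hh 2) \<le> exp (- real k / 4)" by simp
    thus ?thesis using f_nonneg[OF x(1)] by (intro mult_right_mono) auto
  qed
  finally have "2 * (2^k * f (sc n 2 x)) \<le> 2 * (exp (- real k / 4) * f x)" by simp
  moreover have "2^n * f (sc n 2 x) = 2 * (2^k * f (sc n 2 x))" by (metis n_k power_Suc mult.assoc)
  ultimately show ?thesis by (metis mult.assoc)
qed

end

lemma dilate_le:
  assumes c: "c > 0" and um[measurable]: "u \<in> borel_measurable (lebn n)"
    and wm[measurable]: "w \<in> borel_measurable (lebn n)"
    and AE: "AE x in lebn n. c^n * u (sc n c x) \<le> w x" and u0: "\<And>x. x \<in> Rn n \<Longrightarrow> u x \<ge> 0"
  shows "(\<integral>\<^sup>+x. ennreal (u x) \<partial>lebn n) \<le> (\<integral>\<^sup>+x. ennreal (w x) \<partial>lebn n)"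
proof -
  have "(\<integral>\<^sup>+x. ennreal (u x) \<partial>lebn n) = ennreal (c^n) * (\<integral>\<^sup>+x. ennreal (u (sc n c x)) \<partial>lebn n)"
    by (rule nn_integral_dilate[OF c]) measurable
  also have "\<dots> = (\<integral>\<^sup>+x. ennreal (c^n) * ennreal (u (sc n c x)) \<partial>lebn n)"
    by (rule nn_integral_cmult[symmetric]) measurable
  also have "\<dots> = (\<integral>\<^sup>+x. ennreal (c^n * u (sc n c x)) \<partial>lebn n)"
    using c u0 sc_in_Rn by (simp add: ennreal_mult)
  also have "\<dots> \<le> (\<integral>\<^sup>+x. ennreal (w x) \<partial>lebn n)"
    by (rule nn_integral_mono_AE) (use AE in \<open>auto elim!: AE_mp intro: ennreal_leI\<close>)
  finally show ?thesis .
qed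

context LC begin

lemma AE_Rn: "AE x in lebn n. x \<in> Rn n"
  by (rule AE_I2) (simp add: space_lebn)

lemma AE_nz: "AE x in lebn n. enorm n x \<noteq> 0"
  using null_zero[of n] n2 by simp

lemma nn_f: "(\<integral>\<^sup>+x. ennreal (f x) \<partial>lebn n) = 1"
proof -
  have "(\<integral>\<^sup>+x. ennreal (f x) \<partial>lebn n) = ennreal (integral\<^sup>L (lebn n) f)"
    by (rule nn_integral_eq_integral[OF fint]) (use AE_Rn in \<open>auto elim!: AE_mp intro: f_nonneg\<close>)
  thus ?thesis using f1 by simp
qed

lemma nn_cmult_f: assumes "B \<ge> 0" shows "(\<integral>\<^sup>+x. ennreal (B * f x) \<partial>lebn n) = ennreal B"
proof -
  have "(\<integral>\<^sup>+x. ennreal (B * f x) \<partial>lebn n) = (\<integral>\<^sup>+x. ennreal B * ennreal (f x) \<partial>lebn n)"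
    by (rule nn_integral_cong) (use assms f_nonneg in \<open>auto simp: space_lebn ennreal_mult\<close>)
  also have "\<dots> = ennreal B * (\<integral>\<^sup>+x. ennreal (f x) \<partial>lebn n)"
    by (rule nn_integral_cmult) measurable
  finally show ?thesis by (simp add: nn_f)
qed

lemma nn_to_real:
  assumes "integrable (lebn n) g" "\<And>x. x \<in> Rn n \<Longrightarrow> g x \<ge> 0"
    and "(\<integral>\<^sup>+x. ennreal (g x) \<partial>lebn n) \<le> ennreal B" "B \<ge> 0"
  shows "integral\<^sup>L (lebn n) g \<le> B"
proof -
  have "(\<integral>\<^sup>+x. ennreal (g x) \<partial>lebn n) = ennreal (integral\<^sup>L (lebn n) g)"
    by (rule nn_integral_eq_integral[OF assms(1)]) (use AE_Rn assms(2) in \<open>auto elim!: AE_mp\<close>)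
  thus ?thesis using assms(3,4) by simp
qed

lemma integrable_if:
  assumes [measurable]: "Measurable.pred (lebn n) P"
  shows "integrable (lebn n) (\<lambda>x. if P x then f x else 0)"
  by (rule Bochner_Integration.integrable_bound[OF fint]) (use AE_Rn in \<open>auto elim!: AE_mp simp: f_nonneg\<close>)

lemma TL:
  assumes q: "0 < q" "q \<le> 1"
  shows "(\<integral>x. (if enorm n x < q*mm then f x else 0) \<partial>lebn n) \<le> q * (exp (2*\<delta>*n) * exp (- real k * hh q))"
proof (rule nn_to_real)
  show "integrable (lebn n) (\<lambda>x. if enorm n x < q*mm then f x else 0)" by (rule integrable_if) measurable
  show "\<And>x. x \<in> Rn n \<Longrightarrow> (if enorm n x < q*mm then f x else 0) \<ge> 0" using f_nonneg by auto
  show "q * (exp (2*\<delta>*n) * exp (- real k * hh q)) \<ge> 0" using q by simp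
  let ?B = "q * (exp (2*\<delta>*n) * exp (- real k * hh q))"
  have "(\<integral>\<^sup>+x. ennreal (if enorm n x < q*mm then f x else 0) \<partial>lebn n) \<le> (\<integral>\<^sup>+x. ennreal (?B * f x) \<partial>lebn n)"
  proof (rule dilate_le[OF q(1)])
    show "(\<lambda>x. if enorm n x < q*mm then f x else 0) \<in> borel_measurable (lebn n)" by measurable
    show "(\<lambda>x. ?B * f x) \<in> borel_measurable (lebn n)" by measurable
    show "\<And>x. x \<in> Rn n \<Longrightarrow> (if enorm n x < q*mm then f x else 0) \<ge> 0" using f_nonneg by auto
    show "AE x in lebn n. q^n * (if enorm n (sc n q x) < q*mm then f (sc n q x) else 0) \<le> ?B * f x"
      using AE_Rn AE_nz
    proof (eventually_elim)
      case (elim x)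
      show ?case
      proof (cases "enorm n (sc n q x) < q*mm")
        case True
        hence "enorm n x < mm" using q by (simp add: enorm_sc)
        moreover have "0 < enorm n x" using elim enorm_nonneg[of n x] by auto
        ultimately show ?thesis using PL[OF elim(1) _ _ q] True by (simp add: algebra_simps)
      next
        case False
        thus ?thesis using f_nonneg[OF elim(1)] q by simp
      qed
    qed
  qed
  also have "\<dots> = ennreal ?B" using q by (intro nn_cmult_f) simp
  finally show "(\<integral>\<^sup>+x. ennreal (if enorm n x < q*mm then f x else 0) \<partial>lebn n) \<le> ennreal ?B" .
qed


lemma TU:
  assumes q: "1 \<le> q"
  shows "(\<integral>x. (if q*mm < enorm n x \<and> enorm n x < TT then f x else 0) \<partial>lebn n) \<le> q * (exp (2*\<delta>*n) * exp (- real k * hh q))"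
proof (rule nn_to_real)
  show "integrable (lebn n) (\<lambda>x. if q*mm < enorm n x \<and> enorm n x < TT then f x else 0)" by (rule integrable_if) measurable
  show "\<And>x. x \<in> Rn n \<Longrightarrow> (if q*mm < enorm n x \<and> enorm n x < TT then f x else 0) \<ge> 0" using f_nonneg by auto
  show "q * (exp (2*\<delta>*n) * exp (- real k * hh q)) \<ge> 0" using q by simp
  let ?B = "q * (exp (2*\<delta>*n) * exp (- real k * hh q))"
  have q0: "q > 0" using q by simp
  have "(\<integral>\<^sup>+x. ennreal (if q*mm < enorm n x \<and> enorm n x < TT then f x else 0) \<partial>lebn n) \<le> (\<integral>\<^sup>+x. ennreal (?B * f x) \<partial>lebn n)"
  proof (rule dilate_le[OF q0])
    show "(\<lambda>x. if q*mm < enorm n x \<and> enorm n x < TT then f x else 0) \<in> borel_measurable (lebn n)" by measurable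
    show "(\<lambda>x. ?B * f x) \<in> borel_measurable (lebn n)" by measurable
    show "\<And>x. x \<in> Rn n \<Longrightarrow> (if q*mm < enorm n x \<and> enorm n x < TT then f x else 0) \<ge> 0" using f_nonneg by auto
    show "AE x in lebn n. q^n * (if q*mm < enorm n (sc n q x) \<and> enorm n (sc n q x) < TT then f (sc n q x) else 0) \<le> ?B * f x"
      using AE_Rn
    proof (eventually_elim)
      case (elim x)
      show ?case
      proof (cases "q*mm < enorm n (sc n q x) \<and> enorm n (sc n q x) < TT")
        case True
        hence "mm < enorm n x" "q * enorm n x \<le> TT" using q0 by (auto simp: enorm_sc)
        thus ?thesis using PU[OF elim(1) _ q] True by (simp add: algebra_simps)
      next
        case False
        thus ?thesis using f_nonneg[OF elim(1)] q by (subst if_not_P) auto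
      qed
    qed
  qed
  also have "\<dots> = ennreal ?B" using q by (intro nn_cmult_f) simp
  finally show "(\<integral>\<^sup>+x. ennreal (if q*mm < enorm n x \<and> enorm n x < TT then f x else 0) \<partial>lebn n) \<le> ennreal ?B" .
qed

lemma TF:
  assumes small: "8 * \<delta> * n < k" and mT: "mm < TT/4"
  shows "(\<integral>x. (if TT \<le> enorm n x then f x else 0) \<partial>lebn n) \<le> 2 * exp (- real k / 4)"
proof (rule nn_to_real)
  show "integrable (lebn n) (\<lambda>x. if TT \<le> enorm n x then f x else 0)" by (rule integrable_if) measurable
  show "\<And>x. x \<in> Rn n \<Longrightarrow> (if TT \<le> enorm n x then f x else 0) \<ge> 0" using f_nonneg by auto
  show "2 * exp (- real k / 4) \<ge> 0" by simp
  let ?B = "2 * exp (- real k / 4)"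
  have "(\<integral>\<^sup>+x. ennreal (if TT \<le> enorm n x then f x else 0) \<partial>lebn n) \<le> (\<integral>\<^sup>+x. ennreal (?B * f x) \<partial>lebn n)"
  proof (rule dilate_le[of 2])
    show "(\<lambda>x. if TT \<le> enorm n x then f x else 0) \<in> borel_measurable (lebn n)" by measurable
    show "(\<lambda>x. ?B * f x) \<in> borel_measurable (lebn n)" by measurable
    show "\<And>x. x \<in> Rn n \<Longrightarrow> (if TT \<le> enorm n x then f x else 0) \<ge> 0" using f_nonneg by auto
    show "AE x in lebn n. 2^n * (if TT \<le> enorm n (sc n 2 x) then f (sc n 2 x) else 0) \<le> ?B * f x"
      using AE_Rn
    proof (eventually_elim)
      case (elim x)
      show ?case
      proof (cases "TT \<le> enorm n (sc n 2 x)")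
        case True
        hence "TT/2 \<le> enorm n x" by (auto simp: enorm_sc)
        thus ?thesis using PF[OF small mT elim(1)] True by (simp add: algebra_simps)
      next
        case False
        thus ?thesis using f_nonneg[OF elim(1)] by simp
      qed
    qed
  qed simp
  also have "\<dots> = ennreal ?B" by (intro nn_cmult_f) simp
  finally show "(\<integral>\<^sup>+x. ennreal (if TT \<le> enorm n x then f x else 0) \<partial>lebn n) \<le> ennreal ?B" .
qed

lemma TF2:
  assumes small: "8 * \<delta> * n < k" and mT: "mm < TT/4"
    and M2i: "integrable (lebn n) (\<lambda>x. (enorm n x)\<^sup>2 * f x)"
  shows "(\<integral>x. (if TT \<le> enorm n x then (enorm n x)\<^sup>2 * f x else 0) \<partial>lebn n)
     \<le> 8 * exp (- real k / 4) * (\<integral>x. (enorm n x)\<^sup>2 * f x \<partial>lebn n)"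
proof (rule nn_to_real)
  show "integrable (lebn n) (\<lambda>x. if TT \<le> enorm n x then (enorm n x)\<^sup>2 * f x else 0)"
    by (rule Bochner_Integration.integrable_bound[OF M2i]) (use AE_Rn in \<open>auto elim!: AE_mp simp: f_nonneg\<close>)
  show "\<And>x. x \<in> Rn n \<Longrightarrow> (if TT \<le> enorm n x then (enorm n x)\<^sup>2 * f x else 0) \<ge> 0" using f_nonneg by auto
  have M0: "(\<integral>x. (enorm n x)\<^sup>2 * f x \<partial>lebn n) \<ge> 0"
    by (rule integral_nonneg_AE) (use AE_Rn in \<open>auto elim!: AE_mp simp: f_nonneg\<close>)
  thus "8 * exp (- real k / 4) * (\<integral>x. (enorm n x)\<^sup>2 * f x \<partial>lebn n) \<ge> 0" by simp
  let ?B = "8 * exp (- real k / 4)"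
  have "(\<integral>\<^sup>+x. ennreal (if TT \<le> enorm n x then (enorm n x)\<^sup>2 * f x else 0) \<partial>lebn n) \<le> (\<integral>\<^sup>+x. ennreal (?B * ((enorm n x)\<^sup>2 * f x)) \<partial>lebn n)"
  proof (rule dilate_le[of 2])
    show "(\<lambda>x. if TT \<le> enorm n x then (enorm n x)\<^sup>2 * f x else 0) \<in> borel_measurable (lebn n)" by measurable
    show "(\<lambda>x. ?B * ((enorm n x)\<^sup>2 * f x)) \<in> borel_measurable (lebn n)" by measurable
    show "\<And>x. x \<in> Rn n \<Longrightarrow> (if TT \<le> enorm n x then (enorm n x)\<^sup>2 * f x else 0) \<ge> 0" using f_nonneg by auto
    show "AE x in lebn n. 2^n * (if TT \<le> enorm n (sc n 2 x) then (enorm n (sc n 2 x))\<^sup>2 * f (sc n 2 x) else 0) \<le> ?B * ((enorm n x)\<^sup>2 * f x)"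
      using AE_Rn
    proof (eventually_elim)
      case (elim x)
      show ?case
      proof (cases "TT \<le> enorm n (sc n 2 x)")
        case True
        hence "TT/2 \<le> enorm n x" by (auto simp: enorm_sc)
        hence P: "2^n * f (sc n 2 x) \<le> 2 * exp (- real k / 4) * f x" using PF[OF small mT elim(1)] by simp
        have "2^n * ((enorm n (sc n 2 x))\<^sup>2 * f (sc n 2 x)) = (4 * (enorm n x)\<^sup>2) * (2^n * f (sc n 2 x))"
          by (simp add: enorm_sc power_mult_distrib)
        also have "\<dots> \<le> (4 * (enorm n x)\<^sup>2) * (2 * exp (- real k / 4) * f x)"
          using P by (intro mult_left_mono) auto
        also have "\<dots> = ?B * ((enorm n x)\<^sup>2 * f x)" by simp
        finally show ?thesis using True by simp
      next
        case False
        thus ?thesis using f_nonneg[OF elim(1)] by simp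
      qed
    qed
  qed simp
  also have "\<dots> = ennreal (?B * (\<integral>x. (enorm n x)\<^sup>2 * f x \<partial>lebn n))"
  proof -
    have "(\<integral>\<^sup>+x. ennreal (?B * ((enorm n x)\<^sup>2 * f x)) \<partial>lebn n) = ennreal (\<integral>x. ?B * ((enorm n x)\<^sup>2 * f x) \<partial>lebn n)"
      by (rule nn_integral_eq_integral) (use M2i AE_Rn in \<open>auto elim!: AE_mp simp: f_nonneg\<close>)
    thus ?thesis by simp
  qed
  finally show "(\<integral>\<^sup>+x. ennreal (if TT \<le> enorm n x then (enorm n x)\<^sup>2 * f x else 0) \<partial>lebn n) \<le> ennreal (?B * (\<integral>x. (enorm n x)\<^sup>2 * f x \<partial>lebn n))" .
qed

end

lemma layer_low_aux:
  fixes m v t :: real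
  assumes "m > 0" "v > 0" "m - t \<le> m * v * (real J + 1)"
  shows "m - t \<le> m * v + (\<Sum>j=1..J. m * v * (if t < m * (1 - real j * v) then 1 else 0))"
  using assms(3)
proof (induction J)
  case 0 thus ?case by simp
next
  case (Suc J)
  show ?case
  proof (cases "t < m * (1 - real (Suc J) * v)")
    case False
    hence "m - t \<le> m * v * (real J + 1)" by (simp add: algebra_simps)
    from Suc.IH[OF this] show ?thesis using False by simp
  next
    case True
    have all: "\<forall>j\<in>{1..Suc J}. t < m * (1 - real j * v)"
    proof
      fix j assume "j \<in> {1..Suc J}"
      hence "real j * v \<le> real (Suc J) * v" using assms by (intro mult_right_mono) auto
      hence "m * (1 - real (Suc J) * v) \<le> m * (1 - real j * v)" using assms by (intro mult_left_mono) auto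
      thus "t < m * (1 - real j * v)" using True by linarith
    qed
    have "(\<Sum>j=1..Suc J. m * v * (if t < m * (1 - real j * v) then 1 else 0)) = (\<Sum>j=1..Suc J. m * v)"
      using all by (intro sum.cong) auto
    also have "\<dots> = real (Suc J) * (m * v)" by simp
    finally show ?thesis using Suc.prems by (simp add: algebra_simps)
  qed
qed

lemma layer_low:
  fixes m v t :: real
  assumes "m > 0" "v > 0" "t \<ge> 0"
  shows "m - t \<le> m * v + (\<Sum>j=1..nat \<lceil>1/v\<rceil>. m * v * (if t < m * (1 - real j * v) then 1 else 0))"
proof (rule layer_low_aux[OF assms(1,2)])
  have "1/v \<le> real (nat \<lceil>1/v\<rceil>)" by linarith
  hence "v * (1/v) \<le> v * real (nat \<lceil>1/v\<rceil>)" using assms by (intro mult_left_mono) auto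
  hence "1 \<le> v * real (nat \<lceil>1/v\<rceil>)" using assms by simp
  hence "m * 1 \<le> m * (v * (real (nat \<lceil>1/v\<rceil>) + 1))" using assms
    by (intro mult_left_mono) (auto simp: algebra_simps)
  thus "m - t \<le> m * v * (real (nat \<lceil>1/v\<rceil>) + 1)" using assms by (simp add: algebra_simps)
qed

lemma telescope_sq:
  fixes a :: "nat \<Rightarrow> real"
  shows "(\<Sum>j=1..J. a (Suc j) - a j) = a (Suc J) - a 1"
  by (induction J) auto

lemma layer_up_aux:
  fixes m v t :: real
  assumes "m > 0" "v > 0" "t \<ge> 0" "t \<le> (1 + (real J + 1) * v) * m"
  shows "t^2 \<le> ((1+v) * m)^2 + (\<Sum>j=1..J. (((1 + (real j + 1) * v) * m)^2 - ((1 + real j * v) * m)^2) * (if (1 + real j * v) * m < t then 1 else 0))"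
  using assms(4)
proof (induction J)
  case 0
  hence "t^2 \<le> ((1+v) * m)^2" using assms by (intro power_mono) auto
  thus ?case by simp
next
  case (Suc J)
  have dpos: "\<And>j. ((1 + (real j + 1) * v) * m)^2 - ((1 + real j * v) * m)^2 \<ge> 0"
  proof -
    fix j
    have "(1 + real j * v) * m \<le> (1 + (real j + 1) * v) * m" using assms by (intro mult_right_mono) (auto simp: algebra_simps)
    hence "((1 + real j * v) * m)^2 \<le> ((1 + (real j + 1) * v) * m)^2" using assms by (intro power_mono) auto
    thus "((1 + (real j + 1) * v) * m)^2 - ((1 + real j * v) * m)^2 \<ge> 0" by simp
  qed
  show ?case
  proof (cases "t \<le> (1 + (real J + 1) * v) * m")
    case True
    from Suc.IH[OF True] show ?thesis using dpos[of "Suc J"] by simp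
  next
    case False
    have all: "\<forall>j\<in>{1..Suc J}. (1 + real j * v) * m < t"
    proof
      fix j assume "j \<in> {1..Suc J}"
      hence "(1 + real j * v) * m \<le> (1 + (real J + 1) * v) * m" using assms by (intro mult_right_mono) auto
      thus "(1 + real j * v) * m < t" using False by linarith
    qed
    have "(\<Sum>j=1..Suc J. (((1 + (real j + 1) * v) * m)^2 - ((1 + real j * v) * m)^2) * (if (1 + real j * v) * m < t then 1 else 0))
      = (\<Sum>j=1..Suc J. ((\<lambda>j. ((1 + real j * v) * m)^2) (Suc j) - (\<lambda>j. ((1 + real j * v) * m)^2) j))"
      using all by (intro sum.cong) (auto simp: algebra_simps)
    also have "\<dots> = ((1 + (real (Suc J) + 1) * v) * m)^2 - ((1+v) * m)^2"
      by (subst telescope_sq) (simp add: algebra_simps)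
    finally have S: "(\<Sum>j=1..Suc J. (((1 + (real j + 1) * v) * m)^2 - ((1 + real j * v) * m)^2) * (if (1 + real j * v) * m < t then 1 else 0))
      = ((1 + (real (Suc J) + 1) * v) * m)^2 - ((1+v) * m)^2" .
    have "t^2 \<le> ((1 + (real (Suc J) + 1) * v) * m)^2" using Suc.prems assms by (intro power_mono) auto
    thus ?thesis using S by simp
  qed
qed


lemma layer_up:
  fixes m v t TT :: real
  assumes "m > 0" "v > 0" "t \<ge> 0"
  shows "t^2 \<le> ((1+v) * m)^2 + (\<Sum>j=1..nat \<lceil>TT / (m * v)\<rceil>. (((1 + (real j + 1) * v) * m)^2 - ((1 + real j * v) * m)^2) * (if (1 + real j * v) * m < t then 1 else 0))
      + (if TT \<le> t then t^2 else 0)"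
proof (cases "TT \<le> t")
  case True
  have "(\<Sum>j=1..nat \<lceil>TT / (m * v)\<rceil>. (((1 + (real j + 1) * v) * m)^2 - ((1 + real j * v) * m)^2) * (if (1 + real j * v) * m < t then 1 else 0)) \<ge> 0"
  proof (intro sum_nonneg)
    fix j
    have "(1 + real j * v) * m \<le> (1 + (real j + 1) * v) * m" using assms by (intro mult_right_mono) (auto simp: algebra_simps)
    hence "((1 + real j * v) * m)^2 \<le> ((1 + (real j + 1) * v) * m)^2" using assms by (intro power_mono) auto
    thus "(((1 + (real j + 1) * v) * m)^2 - ((1 + real j * v) * m)^2) * (if (1 + real j * v) * m < t then 1 else 0) \<ge> 0" by simp
  qed
  thus ?thesis using True by simp
next
  case False
  define J where "J = nat \<lceil>TT / (m * v)\<rceil>"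
  have "TT / (m * v) \<le> real J" unfolding J_def by linarith
  hence "(m * v) * (TT / (m * v)) \<le> (m * v) * real J" using assms by (intro mult_left_mono) auto
  hence "TT \<le> m * v * real J" using assms by simp
  moreover have "(1 + (real J + 1) * v) * m = m + m * v + m * v * real J" by (simp add: algebra_simps)
  moreover have "0 < m * v" using assms by simp
  ultimately have "t \<le> (1 + (real J + 1) * v) * m" using False assms by linarith
  from layer_up_aux[OF assms this] show ?thesis using False by (simp add: J_def)
qed

context LC begin

lemma moment_low:
  assumes v: "0 < v"
    and H: "\<And>j::nat. 1 \<le> j \<Longrightarrow> real j * v < 1 \<Longrightarrow> (1 - real j * v) * (exp (2*\<delta>*n) * exp (- real k * hh (1 - real j * v))) \<le> exp (- real j)"
    and M1i: "integrable (lebn n) (\<lambda>x. enorm n x * f x)"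
  shows "mm * (1 - 2 * v) \<le> (\<integral>x. enorm n x * f x \<partial>lebn n)"
proof -
  define J where "J = nat \<lceil>1/v\<rceil>"
  define I where "I j = (\<integral>x. (if enorm n x < (1 - real j * v) * mm then f x else 0) \<partial>lebn n)" for j :: nat
  have Iint: "integrable (lebn n) (\<lambda>x. if enorm n x < (1 - real j * v) * mm then f x else 0)" for j
    by (rule integrable_if) measurable
  have Ij: "I j \<le> exp (- real j)" if j: "1 \<le> j" for j
  proof (cases "real j * v < 1")
    case True
    have "I j \<le> (1 - real j * v) * (exp (2*\<delta>*n) * exp (- real k * hh (1 - real j * v)))"
      unfolding I_def by (rule TL) (use True v in auto)
    also have "\<dots> \<le> exp (- real j)" by (rule H[OF j True])
    finally show ?thesis .
  next
    case False
    have "(1 - real j * v) * mm \<le> 0" using False mm(1) by (intro mult_nonpos_nonneg) auto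
    hence "\<And>x. \<not> enorm n x < (1 - real j * v) * mm" using enorm_nonneg by (metis not_less order.trans)
    hence "I j = 0" unfolding I_def by simp
    thus ?thesis by simp
  qed
  have pw: "AE x in lebn n. (mm - enorm n x) * f x \<le> mm * v * f x + (\<Sum>j=1..J. mm * v * (if enorm n x < (1 - real j * v) * mm then f x else 0))"
    using AE_Rn
  proof eventually_elim
    case (elim x)
    have "(mm - enorm n x) * f x \<le> (mm * v + (\<Sum>j=1..J. mm * v * (if enorm n x < mm * (1 - real j * v) then 1 else 0))) * f x"
      unfolding J_def by (intro mult_right_mono layer_low) (use mm(1) v enorm_nonneg f_nonneg[OF elim] in auto)
    also have "\<dots> = mm * v * f x + (\<Sum>j=1..J. (mm * v * (if enorm n x < mm * (1 - real j * v) then 1 else 0)) * f x)"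
      by (simp add: sum_distrib_right distrib_right)
    also have "\<dots> = mm * v * f x + (\<Sum>j=1..J. mm * v * (if enorm n x < (1 - real j * v) * mm then f x else 0))"
      by (intro arg_cong2[where f="(+)"] refl sum.cong) (auto simp: mult.commute)
    finally show ?case .
  qed
  have "(\<integral>x. (mm - enorm n x) * f x \<partial>lebn n) \<le> (\<integral>x. mm * v * f x + (\<Sum>j=1..J. mm * v * (if enorm n x < (1 - real j * v) * mm then f x else 0)) \<partial>lebn n)"
  proof (rule integral_mono_AE[OF _ _ pw])
    have "(\<lambda>x. (mm - enorm n x) * f x) = (\<lambda>x. mm * f x - enorm n x * f x)" by (auto simp: algebra_simps)
    thus "integrable (lebn n) (\<lambda>x. (mm - enorm n x) * f x)" using fint M1i by simp
  qed (use fint M1i Iint in auto)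
  also have "\<dots> = mm * v + (\<Sum>j=1..J. mm * v * I j)"
    using fint Iint by (simp add: integral_sum f1 I_def)
  also have "\<dots> \<le> mm * v + mm * v * 1"
  proof -
    have "(\<Sum>j=1..J. mm * v * I j) = mm * v * (\<Sum>j=1..J. I j)" by (simp add: sum_distrib_left)
    also have "\<dots> \<le> mm * v * (\<Sum>j=1..J. exp (- real j))"
      using mm(1) v Ij by (intro mult_left_mono sum_mono) auto
    also have "\<dots> \<le> mm * v * 1" using mm(1) v geom_exp_sum[of J] by (intro mult_left_mono) auto
    finally have "(\<Sum>j=1..J. mm * v * I j) \<le> mm * v * 1" .
    thus ?thesis by linarith
  qed
  finally have A: "(\<integral>x. (mm - enorm n x) * f x \<partial>lebn n) \<le> mm * v + mm * v * 1" .
  moreover have "(\<integral>x. (mm - enorm n x) * f x \<partial>lebn n) = mm - (\<integral>x. enorm n x * f x \<partial>lebn n)"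
    using fint M1i by (simp add: left_diff_distrib f1)
  moreover have "mm * (1 - 2 * v) = mm - 2 * (mm * v)" by (simp add: algebra_simps)
  ultimately show ?thesis by linarith
qed


lemma moment_up:
  assumes v: "0 < v" "v \<le> 1" and small: "8 * \<delta> * n < k" and mT: "mm < TT/4"
    and H: "\<And>j::nat. 1 \<le> j \<Longrightarrow> (1 + real j * v)^2 * (exp (2*\<delta>*n) * exp (- real k * hh (1 + real j * v))) \<le> exp (- real j)"
    and M2i: "integrable (lebn n) (\<lambda>x. (enorm n x)\<^sup>2 * f x)"
  shows "(\<integral>x. (enorm n x)\<^sup>2 * f x \<partial>lebn n) \<le> mm^2 * (1 + 6 * v) + 3200 * n * exp (- real k / 4)
           + 8 * exp (- real k / 4) * (\<integral>x. (enorm n x)\<^sup>2 * f x \<partial>lebn n)"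
proof -
  define J where "J = nat \<lceil>TT / (mm * v)\<rceil>"
  define d where "d j = ((1 + (real j + 1) * v) * mm)^2 - ((1 + real j * v) * mm)^2" for j :: nat
  define P where "P j = (\<integral>x. (if (1 + real j * v) * mm < enorm n x then f x else 0) \<partial>lebn n)" for j :: nat
  define M2 where "M2 = (\<integral>x. (enorm n x)\<^sup>2 * f x \<partial>lebn n)"
  have Pint: "integrable (lebn n) (\<lambda>x. if (1 + real j * v) * mm < enorm n x then f x else 0)" for j
    by (rule integrable_if) measurable
  have W2int: "integrable (lebn n) (\<lambda>x. if TT \<le> enorm n x then (enorm n x)\<^sup>2 * f x else 0)"
    by (rule Bochner_Integration.integrable_bound[OF M2i]) (use AE_Rn in \<open>auto elim!: AE_mp simp: f_nonneg\<close>)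
  have d_eq: "d j = mm^2 * v * (2 + (2 * real j + 1) * v)" for j
    by (simp add: d_def power2_eq_square algebra_simps)
  have d_nonneg: "d j \<ge> 0" for j using v mm(1) by (simp add: d_eq)
  have d_le: "d j \<le> mm^2 * v * (3 * (1 + real j * v))" for j
  proof -
    have e: "3 * (1 + real j * v) - (2 + (2 * real j + 1) * v) = 1 - v + real j * v" by (simp add: algebra_simps)
    have "0 \<le> real j * v" using v by simp
    hence "2 + (2 * real j + 1) * v \<le> 3 * (1 + real j * v)" using v e by linarith
    hence "mm^2 * v * (2 + (2 * real j + 1) * v) \<le> mm^2 * v * (3 * (1 + real j * v))"
      using v mm(1) by (intro mult_left_mono) auto
    thus ?thesis by (simp only: d_eq)
  qed
  have pw: "AE x in lebn n. (enorm n x)\<^sup>2 * f x \<le> ((1+v) * mm)^2 * f x + (\<Sum>j=1..J. d j * (if (1 + real j * v) * mm < enorm n x then f x else 0))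
       + (if TT \<le> enorm n x then (enorm n x)\<^sup>2 * f x else 0)"
    using AE_Rn
  proof eventually_elim
    case (elim x)
    have "(enorm n x)\<^sup>2 * f x \<le> (((1+v) * mm)^2 + (\<Sum>j=1..J. d j * (if (1 + real j * v) * mm < enorm n x then 1 else 0))
       + (if TT \<le> enorm n x then (enorm n x)^2 else 0)) * f x"
      unfolding J_def d_def by (intro mult_right_mono layer_up) (use mm(1) v enorm_nonneg f_nonneg[OF elim] in auto)
    also have "\<dots> = ((1+v) * mm)^2 * f x + (\<Sum>j=1..J. (d j * (if (1 + real j * v) * mm < enorm n x then 1 else 0)) * f x)
       + (if TT \<le> enorm n x then (enorm n x)\<^sup>2 * f x else 0)"
      by (simp add: sum_distrib_right distrib_right)
    also have "\<dots> = ((1+v) * mm)^2 * f x + (\<Sum>j=1..J. d j * (if (1 + real j * v) * mm < enorm n x then f x else 0))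
       + (if TT \<le> enorm n x then (enorm n x)\<^sup>2 * f x else 0)"
      by (intro arg_cong2[where f="(+)"] refl sum.cong) auto
    finally show ?case .
  qed
  have "M2 \<le> (\<integral>x. ((1+v) * mm)^2 * f x + (\<Sum>j=1..J. d j * (if (1 + real j * v) * mm < enorm n x then f x else 0))
       + (if TT \<le> enorm n x then (enorm n x)\<^sup>2 * f x else 0) \<partial>lebn n)"
    unfolding M2_def by (rule integral_mono_AE[OF _ _ pw]) (use fint M2i Pint W2int in auto)
  also have "\<dots> = ((1+v) * mm)^2 + (\<Sum>j=1..J. d j * P j) + (\<integral>x. (if TT \<le> enorm n x then (enorm n x)\<^sup>2 * f x else 0) \<partial>lebn n)"
    using fint Pint W2int by (simp add: integral_sum f1 P_def)
  finally have A: "M2 \<le> ((1+v) * mm)^2 + (\<Sum>j=1..J. d j * P j) + (\<integral>x. (if TT \<le> enorm n x then (enorm n x)\<^sup>2 * f x else 0) \<partial>lebn n)" .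
  have W: "(\<integral>x. (if TT \<le> enorm n x then (enorm n x)\<^sup>2 * f x else 0) \<partial>lebn n) \<le> 8 * exp (- real k / 4) * M2"
    unfolding M2_def by (rule TF2[OF small mT M2i])
  have Pj: "P j \<le> (1 + real j * v) * (exp (2*\<delta>*n) * exp (- real k * hh (1 + real j * v))) + 2 * exp (- real k / 4)" for j
  proof -
    have "P j \<le> (\<integral>x. (if (1 + real j * v) * mm < enorm n x \<and> enorm n x < TT then f x else 0) + (if TT \<le> enorm n x then f x else 0) \<partial>lebn n)"
      unfolding P_def
      by (rule integral_mono_AE) (use AE_Rn Pint in \<open>auto intro!: integrable_if elim!: AE_mp simp: f_nonneg\<close>)
    also have "\<dots> = (\<integral>x. (if (1 + real j * v) * mm < enorm n x \<and> enorm n x < TT then f x else 0) \<partial>lebn n) + (\<integral>x. (if TT \<le> enorm n x then f x else 0) \<partial>lebn n)"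
    proof (rule Bochner_Integration.integral_add)
      show "integrable (lebn n) (\<lambda>x. if (1 + real j * v) * mm < enorm n x \<and> enorm n x < TT then f x else 0)"
        by (rule integrable_if) measurable
      show "integrable (lebn n) (\<lambda>x. if TT \<le> enorm n x then f x else 0)"
        by (rule integrable_if) measurable
    qed
    also have "\<dots> \<le> (1 + real j * v) * (exp (2*\<delta>*n) * exp (- real k * hh (1 + real j * v))) + 2 * exp (- real k / 4)"
      by (intro add_mono TU TF small mT) (use v in auto)
    finally show ?thesis .
  qed
  have S: "(\<Sum>j=1..J. d j * P j) \<le> 3 * mm^2 * v + 2 * exp (- real k / 4) * (1600 * n)"
  proof -
    have "(\<Sum>j=1..J. d j * P j) \<le> (\<Sum>j=1..J. 3 * mm^2 * v * exp (- real j) + d j * (2 * exp (- real k / 4)))"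
    proof (intro sum_mono)
      fix j assume j: "j \<in> {1..J}"
      have "d j * P j \<le> d j * ((1 + real j * v) * (exp (2*\<delta>*n) * exp (- real k * hh (1 + real j * v))) + 2 * exp (- real k / 4))"
        using Pj d_nonneg by (intro mult_left_mono) auto
      also have "\<dots> = d j * ((1 + real j * v) * (exp (2*\<delta>*n) * exp (- real k * hh (1 + real j * v)))) + d j * (2 * exp (- real k / 4))"
        by (simp add: algebra_simps)
      also have "d j * ((1 + real j * v) * (exp (2*\<delta>*n) * exp (- real k * hh (1 + real j * v))))
          \<le> (mm^2 * v * (3 * (1 + real j * v))) * ((1 + real j * v) * (exp (2*\<delta>*n) * exp (- real k * hh (1 + real j * v))))"
        using d_le v by (intro mult_right_mono) auto
      also have "\<dots> = 3 * mm^2 * v * ((1 + real j * v)^2 * (exp (2*\<delta>*n) * exp (- real k * hh (1 + real j * v))))"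
        by (simp add: power2_eq_square algebra_simps)
      also have "\<dots> \<le> 3 * mm^2 * v * exp (- real j)"
        using H[of j] j v by (intro mult_left_mono) auto
      finally show "d j * P j \<le> 3 * mm^2 * v * exp (- real j) + d j * (2 * exp (- real k / 4))" by simp
    qed
    also have "\<dots> = 3 * mm^2 * v * (\<Sum>j=1..J. exp (- real j)) + 2 * exp (- real k / 4) * (\<Sum>j=1..J. d j)"
      by (simp add: sum.distrib sum_distrib_left sum_distrib_right[symmetric] mult.commute)
    also have "\<dots> \<le> 3 * mm^2 * v * 1 + 2 * exp (- real k / 4) * (1600 * n)"
    proof (intro add_mono mult_left_mono)
      show "(\<Sum>j=1..J. exp (- real j)) \<le> 1" by (rule geom_exp_sum)
      have "(\<Sum>j=1..J. d j) = ((1 + (real J + 1) * v) * mm)^2 - ((1 + 1 * v) * mm)^2"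
        unfolding d_def using telescope_sq[of "\<lambda>j. ((1 + real j * v) * mm)^2" J] by (simp add: algebra_simps)
      also have "\<dots> \<le> ((1 + (real J + 1) * v) * mm)^2" by simp
      also have "\<dots> \<le> (4 * TT)^2"
      proof (intro power_mono)
        have y0: "TT / (mm * v) \<ge> 0" using TT_pos mm(1) v by simp
        have "real J = of_int \<lceil>TT / (mm * v)\<rceil>" unfolding J_def using y0 by simp
        hence "real J \<le> TT / (mm * v) + 1" using ceiling_correct[of "TT / (mm * v)"] by linarith
        hence "mm * v * real J \<le> mm * v * (TT / (mm * v) + 1)" using mm(1) v by (intro mult_left_mono) auto
        also have "\<dots> = TT + mm * v" using mm(1) v by (simp add: field_simps)
        finally have "mm * v * real J \<le> TT + mm * v" .
        moreover have "(1 + (real J + 1) * v) * mm = mm + mm * v + mm * v * real J" by (simp add: algebra_simps)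
        moreover have "mm * v \<le> mm" using mm(1) v by (simp add: mult_left_le)
        ultimately show "(1 + (real J + 1) * v) * mm \<le> 4 * TT" using mm(2) TT_pos by linarith
        show "0 \<le> (1 + (real J + 1) * v) * mm" using mm(1) v by simp
      qed
      also have "(4 * TT)^2 = 1600 * n" by (simp add: TT_def power_mult_distrib)
      finally show "(\<Sum>j=1..J. d j) \<le> 1600 * n" .
    qed (use v mm(1) in auto)
    finally show ?thesis by simp
  qed
  have sq: "((1+v) * mm)^2 \<le> mm^2 * (1 + 3 * v)"
  proof -
    have "((1+v) * mm)^2 = mm^2 * (1 + 2 * v + v * v)" by (simp add: power2_eq_square algebra_simps)
    also have "\<dots> \<le> mm^2 * (1 + 3 * v)" using v by (intro mult_left_mono) (auto simp: mult_left_le)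
    finally show ?thesis .
  qed
  have "M2 \<le> mm^2 * (1 + 3 * v) + (3 * mm^2 * v + 2 * exp (- real k / 4) * (1600 * n)) + 8 * exp (- real k / 4) * M2"
    using A W S sq by linarith
  thus ?thesis unfolding M2_def by (simp add: algebra_simps)
qed

end

lemma H_low:
  fixes D v :: real and k j :: nat
  assumes kv: "real k * v^2 = 16 * (2*D + 1)" and D: "D \<ge> 0" and v: "v > 0" and j: "1 \<le> j" "real j * v < 1"
  shows "(1 - real j * v) * (exp (2*D) * exp (- real k * hh (1 - real j * v))) \<le> exp (- real j)"
proof -
  have h: "(real j * v)^2 / 2 \<le> hh (1 - real j * v)" using hh_lower1[of "1 - real j * v"] j v by simp
  have "real k * ((real j * v)^2 / 2) \<le> real k * hh (1 - real j * v)" using h by (intro mult_left_mono) auto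
  moreover have "real k * ((real j * v)^2 / 2) = (real j)^2 * (real k * v^2) / 2"
    by (simp add: power_mult_distrib algebra_simps)
  moreover have "(real j)^2 * (real k * v^2) / 2 = (real j)^2 * (8 * (2*D + 1))"
    by (subst kv) (simp add: algebra_simps)
  moreover have "(real j)^2 * (8 * (2*D + 1)) \<ge> 2*D + real j"
  proof -
    have jj: "real j \<le> (real j)^2" using j by (simp add: power2_eq_square)
    have j1: "1 \<le> real j" using j by simp
    hence "1 \<le> (real j)^2" using jj by linarith
    hence "1 * (16 * D) \<le> (real j)^2 * (16 * D)" using D by (intro mult_right_mono) auto
    hence "2 * D \<le> (real j)^2 * (16 * D)" using D by linarith
    moreover have "(real j)^2 * (8*(2*D+1)) = (real j)^2 * (16 * D) + 8 * (real j)^2" by (simp add: algebra_simps)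
    ultimately show ?thesis using jj by linarith
  qed
  ultimately have e: "2*D - real k * hh (1 - real j * v) \<le> - real j" by linarith
  have "(1 - real j * v) * (exp (2*D) * exp (- real k * hh (1 - real j * v))) \<le> 1 * (exp (2*D) * exp (- real k * hh (1 - real j * v)))"
    using v j by (intro mult_right_mono) auto
  also have "\<dots> = exp (2*D - real k * hh (1 - real j * v))" by (simp add: exp_add[symmetric])
  also have "\<dots> \<le> exp (- real j)" using e by simp
  finally show ?thesis .
qed

lemma H_up:
  fixes D v :: real and k j :: nat
  assumes kv: "real k * v^2 = 16 * (2*D + 1)" and D: "D \<ge> 0" and v: "v > 0" "v \<le> 1" and j: "1 \<le> j"
  shows "(1 + real j * v)^2 * (exp (2*D) * exp (- real k * hh (1 + real j * v))) \<le> exp (- real j)"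
proof -
  define w where "w = real j * v"
  have w0: "w > 0" using v j by (simp add: w_def)
  have wj: "w \<le> real j" using v j by (simp add: w_def mult_left_le)
  have h: "w^2 / (2 * (1 + w)) \<le> hh (1 + w)" using hh_lower2[of "1 + w"] w0 by simp
  have kh: "real k * hh (1 + w) \<ge> 4 * real j * (2*D + 1)"
  proof (cases "w \<le> 1")
    case True
    have "w^2 / 4 \<le> w^2 / (2 * (1 + w))" using True w0 by (intro divide_left_mono) auto
    hence "w^2 / 4 \<le> hh (1 + w)" using h by (rule order.trans)
    hence "real k * (w^2/4) \<le> real k * hh (1 + w)" by (intro mult_left_mono) auto
    moreover have "real k * (w^2/4) = (real j)^2 * (real k * v^2) / 4"
      by (simp add: w_def power_mult_distrib algebra_simps)
    moreover have "(real j)^2 * (real k * v^2) / 4 = (real j)^2 * (4 * (2*D + 1))"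
      by (subst kv) (simp add: algebra_simps)
    moreover have "(real j)^2 * (4 * (2*D + 1)) \<ge> real j * (4 * (2*D + 1))"
      using j D by (intro mult_right_mono) (auto simp: power2_eq_square)
    moreover have "4 * real j * (2*D + 1) = real j * (4 * (2*D + 1))" by simp
    ultimately show ?thesis by linarith
  next
    case False
    have "w / 4 \<le> w^2 / (2 * (1 + w))" using False w0 by (simp add: field_simps power2_eq_square)
    hence "w / 4 \<le> hh (1 + w)" using h by (rule order.trans)
    hence "real k * (w/4) \<le> real k * hh (1 + w)" by (intro mult_left_mono) auto
    moreover have "real k * v^2 \<le> real k * v"
      using v by (intro mult_left_mono) (auto simp: power2_eq_square mult_left_le)
    hence "16 * (2*D + 1) \<le> real k * v" using kv by simp
    hence "real j * (16 * (2*D + 1)) \<le> real j * (real k * v)" by (intro mult_left_mono) auto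
    hence "4 * real j * (2*D + 1) \<le> real k * (w/4)" by (simp add: w_def algebra_simps)
    ultimately show ?thesis by linarith
  qed
  have sq: "(1 + w)^2 \<le> exp (2 * real j)"
  proof -
    have "(1 + w)^2 \<le> (exp w)^2" using w0 by (intro power_mono) (auto simp: add.commute)
    also have "\<dots> = exp (2*w)" by (rule exp_double[symmetric])
    also have "\<dots> \<le> exp (2 * real j)" using wj by simp
    finally show ?thesis .
  qed
  have "(1 + w)^2 * (exp (2*D) * exp (- real k * hh (1 + w))) \<le> exp (2 * real j) * (exp (2*D) * exp (- real k * hh (1 + w)))"
    using sq by (intro mult_right_mono) auto
  also have "\<dots> = exp (2 * real j + 2*D - real k * hh (1 + w))" by (simp add: exp_add[symmetric] algebra_simps)
  also have "\<dots> \<le> exp (- real j)"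
  proof -
    have "1 * (8*D) \<le> real j * (8*D)" using j D by (intro mult_right_mono) auto
    hence "2*D \<le> real j * (8*D)" using D by linarith
    thus ?thesis using kh by (simp add: algebra_simps)
  qed
  finally show ?thesis by (simp add: w_def)
qed

context LC begin

lemma final_bound:
  fixes \<epsilon> :: real
  assumes eps: "0 < \<epsilon>" "\<epsilon> \<le> 1" and dpos: "\<delta> > 0" and dsm: "204800 * \<delta> \<le> \<epsilon>^2"
    and big: "102400 \<le> \<epsilon>^2 * n" and nbig: "30000 \<le> n"
    and M2i: "integrable (lebn n) (\<lambda>x. (enorm n x)\<^sup>2 * f x)"
    and M2lo: "n \<le> (\<integral>x. (enorm n x)\<^sup>2 * f x \<partial>lebn n)"
    and M2hi: "(\<integral>x. (enorm n x)\<^sup>2 * f x \<partial>lebn n) \<le> 2 * n"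
  shows "(\<integral>x. (if \<epsilon> < \<bar>enorm n x / sqrt (\<integral>x. (enorm n x)\<^sup>2 * f x \<partial>lebn n) - 1\<bar> then f x else 0) \<partial>lebn n)
          \<le> 5 * exp (- (\<epsilon>^2 * n / 48))"
proof -
  define M2 where "M2 = (\<integral>x. (enorm n x)\<^sup>2 * f x \<partial>lebn n)"
  define r where "r = sqrt M2"
  define D where "D = \<delta> * n"
  have kr: "real k = real n - 1" using n2 by (simp add: k_def)
  have D0: "D \<ge> 0" using dpos by (simp add: D_def)
  have kpos: "real k > 0" using kr n2 by simp
  have khalf: "real n / 2 \<le> real k" using kr n2 by simp
  have D_le: "2 * D \<le> \<epsilon>^2 * n / 102400"
  proof -
    have "204800 * \<delta> * n \<le> \<epsilon>^2 * n" using dsm by (intro mult_right_mono) auto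
    thus ?thesis by (simp add: D_def)
  qed
  have e21: "\<epsilon>^2 \<le> 1" using eps by (simp add: power_le_one)
  have e2n: "\<epsilon>^2 * real n \<le> real n" using mult_right_mono[OF e21, of "real n"] by simp
  define v where "v = sqrt (16 * (2*D + 1) / real k)"
  have v0: "v > 0" using D0 kpos by (simp add: v_def)
  have kv: "real k * v^2 = 16 * (2*D + 1)" using D0 kpos by (simp add: v_def)
  have v_eps: "v \<le> \<epsilon> / 40"
  proof -
    have "16 * (2*D + 1) * 1600 \<le> \<epsilon>^2 * real k"
    proof -
      have "\<epsilon>^2 * (real n / 2) \<le> \<epsilon>^2 * real k" using khalf by (intro mult_left_mono) auto
      thus ?thesis using D_le big by (simp add: algebra_simps)
    qed
    hence "16 * (2*D + 1) / real k \<le> (\<epsilon> / 40)^2" using kpos by (simp add: field_simps power2_eq_square)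
    hence "v \<le> sqrt ((\<epsilon> / 40)^2)" unfolding v_def by (rule real_sqrt_le_mono)
    thus ?thesis using eps by simp
  qed
  have v1: "v \<le> 1" "v \<le> 1/40" using v_eps eps by auto
  have M1i: "integrable (lebn n) (\<lambda>x. enorm n x * f x)"
  proof (rule Bochner_Integration.integrable_bound)
    show "integrable (lebn n) (\<lambda>x. (enorm n x)\<^sup>2 * f x + f x)" using M2i fint by simp
    show "AE x in lebn n. norm (enorm n x * f x) \<le> norm ((enorm n x)\<^sup>2 * f x + f x)"
      using AE_Rn
    proof eventually_elim
      case (elim x)
      have "0 \<le> (enorm n x - 1)^2" by simp
      hence "2 * enorm n x \<le> (enorm n x)\<^sup>2 + 1" by (simp add: power2_eq_square algebra_simps)
      hence "enorm n x \<le> (enorm n x)\<^sup>2 + 1" using enorm_nonneg[of n x] by linarith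
      hence "enorm n x * f x \<le> ((enorm n x)\<^sup>2 + 1) * f x" using f_nonneg[OF elim] by (intro mult_right_mono) auto
      thus ?case using f_nonneg[OF elim] enorm_nonneg[of n x] by (simp add: algebra_simps)
    qed
  qed measurable
  have M2pos: "M2 \<ge> n" "M2 \<le> 2 * n" using M2lo M2hi by (auto simp: M2_def)
  have r0: "r > 0" using M2pos n2 by (simp add: r_def)
  have rsq: "r^2 = M2" using M2pos by (simp add: r_def)
  have r_le: "r \<le> sqrt 2 * sqrt n" using M2pos by (simp add: r_def real_sqrt_mult[symmetric])
  have ML1: "mm * (1 - 2 * v) \<le> (\<integral>x. enorm n x * f x \<partial>lebn n)"
  proof (rule moment_low[OF v0 _ M1i])
    fix j :: nat assume j: "1 \<le> j" "real j * v < 1"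
    from H_low[OF kv D0 v0 j] show "(1 - real j * v) * (exp (2 * \<delta> * real n) * exp (- real k * hh (1 - real j * v))) \<le> exp (- real j)"
      by (simp add: D_def mult.assoc)
  qed
  have E1: "(\<integral>x. enorm n x * f x \<partial>lebn n) \<le> r"
  proof -
    have "(\<integral>x. enorm n x * f x \<partial>lebn n) \<le> (\<integral>x. ((enorm n x)\<^sup>2 * f x / r + r * f x) / 2 \<partial>lebn n)"
    proof (rule integral_mono_AE)
      show "integrable (lebn n) (\<lambda>x. ((enorm n x)\<^sup>2 * f x / r + r * f x) / 2)" using M2i fint by simp
      show "AE x in lebn n. enorm n x * f x \<le> ((enorm n x)\<^sup>2 * f x / r + r * f x) / 2"
        using AE_Rn
      proof eventually_elim
        case (elim x)
        have "2 * r * enorm n x \<le> (enorm n x)\<^sup>2 + r^2"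
          using sum_squares_ge_zero[of "enorm n x - r" 0] by (simp add: power2_eq_square algebra_simps)
        hence "enorm n x \<le> ((enorm n x)\<^sup>2 / r + r) / 2" using r0 by (simp add: field_simps power2_eq_square)
        hence "enorm n x * f x \<le> (((enorm n x)\<^sup>2 / r + r) / 2) * f x" using f_nonneg[OF elim] by (intro mult_right_mono) auto
        thus ?case by (simp add: field_simps)
      qed
    qed (rule M1i)
    also have "\<dots> = (M2 / r + r) / 2" using M2i fint by (simp add: M2_def f1)
    also have "\<dots> = r" using r0 rsq by (simp add: field_simps power2_eq_square)
    finally show ?thesis .
  qed
  have mm_up: "mm \<le> r * (1 + \<epsilon> / 10)"
  proof -
    have "mm * 1 \<le> mm * ((1 + 4 * v) * (1 - 2 * v))"
    proof (intro mult_left_mono)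
      have "(1 + 4 * v) * (1 - 2 * v) = 1 + v * (2 - 8 * v)" by (simp add: algebra_simps)
      moreover have "v * (2 - 8 * v) \<ge> 0" using v0 v1 by (intro mult_nonneg_nonneg) auto
      ultimately show "1 \<le> (1 + 4 * v) * (1 - 2 * v)" by linarith
    qed (use mm in auto)
    also have "\<dots> = (1 + 4 * v) * (mm * (1 - 2 * v))" by (simp add: algebra_simps)
    also have "\<dots> \<le> (1 + 4 * v) * r" using ML1 E1 v0 by (intro mult_left_mono) auto
    also have "\<dots> \<le> (1 + \<epsilon> / 10) * r" using v_eps r0 by (intro mult_right_mono) auto
    finally show ?thesis by (simp add: algebra_simps)
  qed
  have mT: "mm < TT / 4"
  proof -
    have s2: "sqrt 2 < (3/2::real)" by (rule real_less_lsqrt) (auto simp: power2_eq_square)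
    have "mm \<le> r * (1 + \<epsilon> / 10)" by (rule mm_up)
    also have "\<dots> \<le> (sqrt 2 * sqrt n) * (11/10)" using r_le eps r0 by (intro mult_mono) auto
    also have "\<dots> < (3/2 * sqrt n) * (11/10)" using s2 n2 by (intro mult_strict_right_mono) auto
    also have "\<dots> < TT / 4" using n2 by (simp add: TT_def)
    finally show ?thesis .
  qed
  have small: "8 * \<delta> * n < k"
  proof -
    have "8 * \<delta> * n = 4 * (2 * D)" by (simp add: D_def)
    also have "\<dots> \<le> 4 * (\<epsilon>^2 * n / 102400)" using D_le by linarith
    also have "\<dots> \<le> 4 * (n / 102400)"
      by (intro mult_left_mono divide_right_mono e2n) auto
    also have "\<dots> < real n - 1" using n2 by simp
    finally show ?thesis using kr by simp
  qed
  define \<eta> where "\<eta> = exp (- real k / 4)"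
  have eta0: "\<eta> > 0" by (simp add: \<eta>_def)
  have MU1: "M2 \<le> mm^2 * (1 + 6 * v) + 3200 * n * \<eta> + 8 * \<eta> * M2"
    unfolding M2_def \<eta>_def
  proof (rule moment_up[OF v0 v1(1) small mT _ M2i])
    fix j :: nat assume j: "1 \<le> j"
    from H_up[OF kv D0 v0 v1(1) j] show "(1 + real j * v)^2 * (exp (2 * \<delta> * real n) * exp (- real k * hh (1 + real j * v))) \<le> exp (- real j)"
      by (simp add: D_def mult.assoc)
  qed
  have eta_small: "3208 * \<eta> \<le> \<epsilon> / 40"
  proof -
    have ek: "real k^2 / 64 \<le> exp (real k / 4)" using exp_ge_sq4[of "real k / 4"] kpos by (simp add: power_divide)
    have "401 * real n * 64 \<le> real k^2"
    proof -
      have "real k \<ge> 25665" using kr nbig by simp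
      hence "real k * 25665 \<le> real k * real k" using kpos by (intro mult_left_mono) auto
      moreover have "25664 * real n \<le> real k * 25665" using kr nbig by simp
      ultimately show ?thesis by (simp add: power2_eq_square)
    qed
    hence n_exp: "401 * real n \<le> exp (real k / 4)" using ek by simp
    have sn: "320 \<le> \<epsilon> * sqrt n"
    proof -
      have "sqrt 102400 \<le> sqrt (\<epsilon>^2 * n)" using big by (rule real_sqrt_le_mono)
      moreover have "sqrt (102400::real) = 320" by (simp add: real_sqrt_unique)
      moreover have "sqrt (\<epsilon>^2 * n) = \<epsilon> * sqrt n" using eps by (simp add: real_sqrt_mult)
      ultimately show ?thesis by simp
    qed
    have s1: "1 \<le> sqrt (real n)" using n2 by simp
    have "sqrt (real n) * 1 \<le> sqrt (real n) * sqrt (real n)" using s1 by (intro mult_left_mono) auto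
    hence sq_n: "sqrt n \<le> n" by simp
    have A: "\<eta> * (401 * real n) \<le> 1"
    proof -
      have "\<eta> * (401 * real n) \<le> \<eta> * exp (real k / 4)" using n_exp eta0 by (intro mult_left_mono) auto
      also have "\<dots> = 1" by (simp add: \<eta>_def exp_minus field_simps)
      finally show ?thesis .
    qed
    have B: "320 \<le> \<epsilon> * n"
    proof -
      have "\<epsilon> * sqrt n \<le> \<epsilon> * n" using sq_n eps by (intro mult_left_mono) auto
      thus ?thesis using sn by linarith
    qed
    have "(128320 * \<eta>) * n = 320 * (\<eta> * (401 * real n))" by simp
    also have "\<dots> \<le> 320" using A by simp
    also have "\<dots> \<le> \<epsilon> * n" by (rule B)
    finally have "(128320 * \<eta>) * n \<le> \<epsilon> * n" .
    hence "128320 * \<eta> \<le> \<epsilon>" using n2 by (simp add: mult_le_cancel_right_pos)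
    thus ?thesis by simp
  qed
  have mm_lo: "r * (1 - \<epsilon> / 10) \<le> mm"
  proof -
    have a: "M2 * (1 - 3208 * \<eta>) \<le> mm^2 * (1 + 6 * v)"
    proof -
      have "3200 * n * \<eta> \<le> 3200 * M2 * \<eta>" using M2pos eta0 by (intro mult_right_mono) auto
      thus ?thesis using MU1 by (simp add: algebra_simps)
    qed
    have b: "(1 - \<epsilon>/10)^2 * (1 + 6 * v) \<le> 1 - 3208 * \<eta>"
    proof -
      have "(1 - \<epsilon>/10)^2 * (1 + 6 * v) \<le> (1 - \<epsilon>/10)^2 * (1 + 3 * \<epsilon> / 20)"
        using v_eps by (intro mult_left_mono) auto
      also have "\<dots> = 1 - \<epsilon>/20 - \<epsilon>^2 * (1/50 - 3 * \<epsilon> / 2000)" by (simp add: power2_eq_square algebra_simps)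
      also have "\<dots> \<le> 1 - \<epsilon>/20"
      proof -
        have "\<epsilon>^2 * (1/50 - 3 * \<epsilon> / 2000) \<ge> 0" using eps by (intro mult_nonneg_nonneg) auto
        thus ?thesis by linarith
      qed
      also have "\<dots> \<le> 1 - 3208 * \<eta>" using eta_small eps by linarith
      finally show ?thesis .
    qed
    have "(M2 * (1 - \<epsilon>/10)^2) * (1 + 6 * v) \<le> M2 * (1 - 3208 * \<eta>)"
      using b M2pos n2 by (simp add: mult.assoc mult_left_mono)
    also have "\<dots> \<le> mm^2 * (1 + 6 * v)" by (rule a)
    finally have "M2 * (1 - \<epsilon>/10)^2 \<le> mm^2" using v0 by (simp add: mult_le_cancel_right_pos)
    hence "(r * (1 - \<epsilon>/10))^2 \<le> mm^2" using rsq by (simp add: power_mult_distrib)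
    thus ?thesis by (rule power2_le_imp_le[OF _ less_imp_le[OF mm(1)]])
  qed
  define q1 where "q1 = 1 + \<epsilon>/2"
  define q2 where "q2 = 1 - \<epsilon>/2"
  have q1: "1 \<le> q1" "q1 \<le> 3/2" using eps by (auto simp: q1_def)
  have q2: "0 < q2" "q2 \<le> 1" using eps by (auto simp: q2_def)
  have q1mm: "q1 * mm \<le> (1 + \<epsilon>) * r"
  proof -
    have "q1 * mm \<le> q1 * (r * (1 + \<epsilon> / 10))" using mm_up q1 by (intro mult_left_mono) auto
    also have "\<dots> = r * (1 + \<epsilon> * 3/5 + \<epsilon>^2/20)" by (simp add: q1_def power2_eq_square field_simps)
    also have "\<dots> \<le> r * (1 + \<epsilon>)"
    proof (intro mult_left_mono)
      have "\<epsilon>^2 \<le> \<epsilon>" using eps by (simp add: power2_eq_square mult_left_le)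
      thus "1 + \<epsilon> * 3/5 + \<epsilon>^2/20 \<le> 1 + \<epsilon>" using eps by linarith
    qed (use r0 in simp)
    finally show ?thesis by (simp add: algebra_simps)
  qed
  have q2mm: "(1 - \<epsilon>) * r \<le> q2 * mm"
  proof -
    have "r * (1 - \<epsilon>) \<le> r * (1 - \<epsilon> * 3/5 + \<epsilon>^2/20)"
    proof (intro mult_left_mono)
      have "\<epsilon>^2 \<ge> 0" by simp
      thus "1 - \<epsilon> \<le> 1 - \<epsilon> * 3/5 + \<epsilon>^2/20" using eps by linarith
    qed (use r0 in simp)
    also have "\<dots> = q2 * (r * (1 - \<epsilon> / 10))" by (simp add: q2_def power2_eq_square field_simps)
    also have "\<dots> \<le> q2 * mm" using mm_lo q2 by (intro mult_left_mono) auto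
    finally show ?thesis by (simp add: algebra_simps)
  qed
  have expo: "2 * D - real k * (\<epsilon>^2 / 12) \<le> - (\<epsilon>^2 * n / 48)"
  proof -
    have a: "real n / 2 * (\<epsilon>^2 / 12) \<le> real k * (\<epsilon>^2 / 12)" using khalf by (intro mult_right_mono) auto
    have b: "real n / 2 * (\<epsilon>^2 / 12) = (\<epsilon>^2 * real n) / 24" by simp
    have c: "0 \<le> \<epsilon>^2 * real n" by simp
    show ?thesis using a b c D_le by linarith
  qed
  have T1: "(\<integral>x. (if q1 * mm < enorm n x \<and> enorm n x < TT then f x else 0) \<partial>lebn n) \<le> 3/2 * exp (- (\<epsilon>^2 * n / 48))"
  proof -
    have "(\<integral>x. (if q1 * mm < enorm n x \<and> enorm n x < TT then f x else 0) \<partial>lebn n) \<le> q1 * (exp (2*\<delta>*n) * exp (- real k * hh q1))"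
      by (rule TU[OF q1(1)])
    also have "\<dots> \<le> 3/2 * exp (- (\<epsilon>^2 * n / 48))"
    proof (intro mult_mono)
      have "(q1 - 1)^2 / (2 * q1) \<le> hh q1" by (rule hh_lower2[OF q1(1)])
      moreover have "\<epsilon>^2 / 12 \<le> (q1 - 1)^2 / (2 * q1)"
      proof -
        have "\<epsilon>^2 / 12 \<le> \<epsilon>^2 / (8 * q1)" using q1 by (intro divide_left_mono) auto
        also have "\<epsilon>^2 / (8 * q1) = (q1 - 1)^2 / (2 * q1)" by (simp add: q1_def power_divide)
        finally show ?thesis .
      qed
      ultimately have "real k * (\<epsilon>^2 / 12) \<le> real k * hh q1" by (intro mult_left_mono) auto
      hence "2*\<delta>*n - real k * hh q1 \<le> - (\<epsilon>^2 * n / 48)" using expo by (simp add: D_def)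
      thus "exp (2*\<delta>*n) * exp (- real k * hh q1) \<le> exp (- (\<epsilon>^2 * n / 48))" by (simp add: exp_add[symmetric])
    qed (use q1 in auto)
    finally show ?thesis .
  qed
  have T2: "(\<integral>x. (if enorm n x < q2 * mm then f x else 0) \<partial>lebn n) \<le> exp (- (\<epsilon>^2 * n / 48))"
  proof -
    have "(\<integral>x. (if enorm n x < q2 * mm then f x else 0) \<partial>lebn n) \<le> q2 * (exp (2*\<delta>*n) * exp (- real k * hh q2))"
      by (rule TL[OF q2])
    also have "\<dots> \<le> 1 * exp (- (\<epsilon>^2 * n / 48))"
    proof (intro mult_mono)
      have "(1 - q2)^2 / 2 \<le> hh q2" by (rule hh_lower1[OF q2])
      moreover have "\<epsilon>^2 / 12 \<le> (1 - q2)^2 / 2"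
        by (simp add: q2_def field_simps power2_eq_square)
      ultimately have "real k * (\<epsilon>^2 / 12) \<le> real k * hh q2" by (intro mult_left_mono) auto
      hence "2*\<delta>*n - real k * hh q2 \<le> - (\<epsilon>^2 * n / 48)" using expo by (simp add: D_def)
      thus "exp (2*\<delta>*n) * exp (- real k * hh q2) \<le> exp (- (\<epsilon>^2 * n / 48))" by (simp add: exp_add[symmetric])
    qed (use q2 in auto)
    finally show ?thesis by simp
  qed
  have T3: "(\<integral>x. (if TT \<le> enorm n x then f x else 0) \<partial>lebn n) \<le> 2 * exp (- (\<epsilon>^2 * n / 48))"
  proof -
    have "(\<integral>x. (if TT \<le> enorm n x then f x else 0) \<partial>lebn n) \<le> 2 * exp (- real k / 4)"
      by (rule TF[OF small mT])
    also have "\<dots> \<le> 2 * exp (- (\<epsilon>^2 * n / 48))"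
    proof -
      have "\<epsilon>^2 * n \<le> n" by (rule e2n)
      hence "\<epsilon>^2 * n / 48 \<le> real k / 4" using khalf by linarith
      thus ?thesis by simp
    qed
    finally show ?thesis .
  qed
  have "(\<integral>x. (if \<epsilon> < \<bar>enorm n x / r - 1\<bar> then f x else 0) \<partial>lebn n)
      \<le> (\<integral>x. (if q1 * mm < enorm n x \<and> enorm n x < TT then f x else 0) + (if enorm n x < q2 * mm then f x else 0)
            + (if TT \<le> enorm n x then f x else 0) \<partial>lebn n)"
  proof (rule integral_mono_AE)
    show "integrable (lebn n) (\<lambda>x. if \<epsilon> < \<bar>enorm n x / r - 1\<bar> then f x else 0)" by (rule integrable_if) measurable
    show "integrable (lebn n) (\<lambda>x. (if q1 * mm < enorm n x \<and> enorm n x < TT then f x else 0) + (if enorm n x < q2 * mm then f x else 0)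
            + (if TT \<le> enorm n x then f x else 0))"
      by (intro Bochner_Integration.integrable_add integrable_if) measurable
    show "AE x in lebn n. (if \<epsilon> < \<bar>enorm n x / r - 1\<bar> then f x else 0) \<le> (if q1 * mm < enorm n x \<and> enorm n x < TT then f x else 0) + (if enorm n x < q2 * mm then f x else 0)
            + (if TT \<le> enorm n x then f x else 0)"
      using AE_Rn
    proof eventually_elim
      case (elim x)
      have fx: "f x \<ge> 0" using f_nonneg[OF elim] .
      show ?case
      proof (cases "\<epsilon> < \<bar>enorm n x / r - 1\<bar>")
        case False thus ?thesis using fx by auto
      next
        case True
        hence "(1 + \<epsilon>) * r < enorm n x \<or> enorm n x < (1 - \<epsilon>) * r"
          using r0 by (auto simp: abs_if field_simps split: if_splits)
        thus ?thesis
        proof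
          assume "(1 + \<epsilon>) * r < enorm n x"
          hence "q1 * mm < enorm n x" using q1mm by linarith
          thus ?thesis using fx True by auto
        next
          assume "enorm n x < (1 - \<epsilon>) * r"
          hence "enorm n x < q2 * mm" using q2mm by linarith
          thus ?thesis using fx True by auto
        qed
      qed
    qed
  qed
  also have "\<dots> = (\<integral>x. (if q1 * mm < enorm n x \<and> enorm n x < TT then f x else 0) \<partial>lebn n) + (\<integral>x. (if enorm n x < q2 * mm then f x else 0) \<partial>lebn n)
            + (\<integral>x. (if TT \<le> enorm n x then f x else 0) \<partial>lebn n)"
  proof -
    have i1: "integrable (lebn n) (\<lambda>x. if q1 * mm < enorm n x \<and> enorm n x < TT then f x else 0)" by (rule integrable_if) measurable
    have i2: "integrable (lebn n) (\<lambda>x. if enorm n x < q2 * mm then f x else 0)" by (rule integrable_if) measurable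
    have i3: "integrable (lebn n) (\<lambda>x. if TT \<le> enorm n x then f x else 0)" by (rule integrable_if) measurable
    show ?thesis using i1 i2 i3 by simp
  qed
  also have "\<dots> \<le> 3/2 * exp (- (\<epsilon>^2 * n / 48)) + exp (- (\<epsilon>^2 * n / 48)) + 2 * exp (- (\<epsilon>^2 * n / 48))"
    using T1 T2 T3 by linarith
  also have "\<dots> \<le> 5 * exp (- (\<epsilon>^2 * n / 48))" by simp
  finally show ?thesis by (simp add: r_def M2_def)
qed

end

lemma meas_density_eq:
  assumes fm[measurable]: "f \<in> borel_measurable (lebn n)" and fint: "integrable (lebn n) f"
    and f0: "\<And>x. x \<in> Rn n \<Longrightarrow> f x \<ge> 0"
    and P[measurable]: "Measurable.pred (lebn n) P"
  shows "measure (density (lebn n) (\<lambda>x. ennreal (f x))) {x \<in> Rn n. P x} = (\<integral>x. (if P x then f x else 0) \<partial>lebn n)"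
proof -
  have S: "{x \<in> Rn n. P x} \<in> sets (lebn n)"
  proof -
    have "{x \<in> space (lebn n). P x} \<in> sets (lebn n)" by measurable
    thus ?thesis by (simp add: space_lebn)
  qed
  have ii: "integrable (lebn n) (\<lambda>x. if P x then f x else 0)"
    by (rule Bochner_Integration.integrable_bound[OF fint]) (auto simp: space_lebn f0 intro!: AE_I2)
  have "emeasure (density (lebn n) (\<lambda>x. ennreal (f x))) {x \<in> Rn n. P x} = (\<integral>\<^sup>+x. ennreal (f x) * indicator {x \<in> Rn n. P x} x \<partial>lebn n)"
    using S by (simp add: emeasure_density)
  also have "\<dots> = (\<integral>\<^sup>+x. ennreal (if P x then f x else 0) \<partial>lebn n)"
    by (rule nn_integral_cong) (auto simp: space_lebn indicator_def)
  also have "\<dots> = ennreal (\<integral>x. (if P x then f x else 0) \<partial>lebn n)"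
    by (rule nn_integral_eq_integral[OF ii]) (auto simp: space_lebn f0 intro!: AE_I2)
  finally have "emeasure (density (lebn n) (\<lambda>x. ennreal (f x))) {x \<in> Rn n. P x} = ennreal (\<integral>x. (if P x then f x else 0) \<partial>lebn n)" .
  moreover have "(\<integral>x. (if P x then f x else 0) \<partial>lebn n) \<ge> 0"
    by (rule integral_nonneg_AE) (auto simp: space_lebn f0 intro!: AE_I2)
  ultimately show ?thesis by (simp add: measure_def)
qed

theorem lemma4p2:
  shows "\<exists>c C::real. c > 0 \<and> C > 0 \<and>
    (\<forall>(n::nat) (f::(nat \<Rightarrow> real) \<Rightarrow> real) (\<delta>::real) (\<epsilon>::real).
       real n \<ge> C \<and>
       C2_on_Rn n f \<and> log_concave n f \<and> prob_density n f \<and>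
       (\<forall>i<n. integrable (lebn n) (\<lambda>x. x i * f x) \<and>
              (\<integral>x. x i * f x \<partial>lebn n) = 0) \<and>
       real n \<le> (\<integral>x. (enorm n x)\<^sup>2 * f x \<partial>lebn n) \<and>
       (\<integral>x. (enorm n x)\<^sup>2 * f x \<partial>lebn n) \<le> 2 * real n \<and>
       \<delta> > 0 \<and>
       (\<forall>x1\<in>Rn n. \<forall>x2\<in>Rn n. enorm n x1 = enorm n x2 \<and> enorm n x1 \<le> 10 * sqrt (real n) \<longrightarrow>
           f x1 > 0 \<and> f x2 > 0 \<and> \<bar>ln (f x1) - ln (f x2)\<bar> \<le> \<delta> * real n) \<and>
       C * sqrt \<delta> \<le> \<epsilon> \<and> \<epsilon> \<le> 1
       \<longrightarrow>
       (let r = sqrt (\<integral>x. (enorm n x)\<^sup>2 * f x \<partial>lebn n) in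
         measure (density (lebn n) (\<lambda>x. ennreal (f x)))
           {x \<in> Rn n. \<bar>enorm n x / r - 1\<bar> > \<epsilon>}
         \<le> C * exp (- c * \<epsilon>\<^sup>2 * real n)))"
proof (rule exI[of _ "1/1000::real"], rule exI[of _ "exp 400::real"], intro conjI allI impI)
  show "(0::real) < 1/1000" by simp
  show "(0::real) < exp 400" by simp
  fix n :: nat and f :: "(nat \<Rightarrow> real) \<Rightarrow> real" and \<delta> \<epsilon> :: real
  assume H: "exp 400 \<le> real n \<and>
       C2_on_Rn n f \<and> log_concave n f \<and> prob_density n f \<and>
       (\<forall>i<n. integrable (lebn n) (\<lambda>x. x i * f x) \<and>
              (\<integral>x. x i * f x \<partial>lebn n) = 0) \<and>
       real n \<le> (\<integral>x. (enorm n x)\<^sup>2 * f x \<partial>lebn n) \<and>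
       (\<integral>x. (enorm n x)\<^sup>2 * f x \<partial>lebn n) \<le> 2 * real n \<and>
       \<delta> > 0 \<and>
       (\<forall>x1\<in>Rn n. \<forall>x2\<in>Rn n. enorm n x1 = enorm n x2 \<and> enorm n x1 \<le> 10 * sqrt (real n) \<longrightarrow>
           f x1 > 0 \<and> f x2 > 0 \<and> \<bar>ln (f x1) - ln (f x2)\<bar> \<le> \<delta> * real n) \<and>
       exp 400 * sqrt \<delta> \<le> \<epsilon> \<and> \<epsilon> \<le> 1"
  have e400: "(40000::real) \<le> exp 400" using exp_ge_sq4[of 400] by simp
  have nC: "40000 \<le> real n" using H e400 by linarith
  have n2: "n \<ge> 2" using nC by simp
  have lcf: "log_concave n f" using H by blast
  have pd: "prob_density n f" using H by blast
  hence fm: "f \<in> borel_measurable (lebn n)" and fint: "integrable (lebn n) f" and f1: "integral\<^sup>L (lebn n) f = 1"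
    and f0: "\<And>x. x \<in> Rn n \<Longrightarrow> f x \<ge> 0"
    by (auto simp: prob_density_def)
  have fcont: "continuous_on (Rn n) f" using H by (auto simp: C2_on_Rn_def)
  have sym: "\<forall>x1\<in>Rn n. \<forall>x2\<in>Rn n. enorm n x1 = enorm n x2 \<and> enorm n x1 \<le> 10 * sqrt (real n) \<longrightarrow>
           f x1 > 0 \<and> f x2 > 0 \<and> \<bar>ln (f x1) - ln (f x2)\<bar> \<le> \<delta> * real n" using H by blast
  have dpos: "\<delta> > 0" using H by blast
  have eps: "exp 400 * sqrt \<delta> \<le> \<epsilon>" "\<epsilon> \<le> 1" using H by auto
  have M2lo: "real n \<le> (\<integral>x. (enorm n x)\<^sup>2 * f x \<partial>lebn n)" and M2hi: "(\<integral>x. (enorm n x)\<^sup>2 * f x \<partial>lebn n) \<le> 2 * real n"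
    using H by auto
  have eps0: "\<epsilon> > 0" using eps(1) dpos by (smt (verit) exp_gt_zero mult_pos_pos real_sqrt_gt_zero)
  interpret LC n f \<delta>
    by unfold_locales (use n2 lcf fm fint f1 fcont sym in auto)
  define r where "r = sqrt (\<integral>x. (enorm n x)\<^sup>2 * f x \<partial>lebn n)"
  have meq: "measure (density (lebn n) (\<lambda>x. ennreal (f x))) {x \<in> Rn n. \<bar>enorm n x / r - 1\<bar> > \<epsilon>}
      = (\<integral>x. (if \<epsilon> < \<bar>enorm n x / r - 1\<bar> then f x else 0) \<partial>lebn n)"
    by (rule meas_density_eq[OF fm fint f0]) measurable
  have goal: "(\<integral>x. (if \<epsilon> < \<bar>enorm n x / r - 1\<bar> then f x else 0) \<partial>lebn n) \<le> exp 400 * exp (- (1/1000) * \<epsilon>\<^sup>2 * real n)"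
  proof (cases "102400 \<le> \<epsilon>^2 * n")
    case False
    have "(\<integral>x. (if \<epsilon> < \<bar>enorm n x / r - 1\<bar> then f x else 0) \<partial>lebn n) \<le> (\<integral>x. f x \<partial>lebn n)"
      by (rule integral_mono_AE) (use fint in \<open>auto intro!: integrable_if AE_I2 simp: space_lebn f0\<close>)
    also have "\<dots> = 1" by (rule f1)
    also have "1 \<le> exp 400 * exp (- (1/1000) * \<epsilon>\<^sup>2 * real n)"
    proof -
      have "- (1/1000) * \<epsilon>\<^sup>2 * real n \<ge> -400" using False by simp
      hence "0 \<le> 400 + (- (1/1000) * \<epsilon>\<^sup>2 * real n)" by linarith
      hence "1 \<le> exp (400 + (- (1/1000) * \<epsilon>\<^sup>2 * real n))" by simp
      thus ?thesis by (simp only: exp_add)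
    qed
    finally show ?thesis .
  next
    case True
    have dsm: "204800 * \<delta> \<le> \<epsilon>^2"
    proof -
      have "(exp 400 * sqrt \<delta>)^2 \<le> \<epsilon>^2" using eps dpos by (intro power_mono) (auto intro!: mult_nonneg_nonneg)
      hence "(exp 400)^2 * \<delta> \<le> \<epsilon>^2" using dpos by (simp add: power_mult_distrib)
      moreover have "204800 \<le> (exp 400 :: real)^2"
      proof -
        have "(40000::real)^2 \<le> (exp 400)^2" using e400 by (intro power_mono) auto
        thus ?thesis by simp
      qed
      hence "204800 * \<delta> \<le> (exp 400)^2 * \<delta>" using dpos by (intro mult_right_mono) auto
      ultimately show ?thesis by linarith
    qed
    have M2i: "integrable (lebn n) (\<lambda>x. (enorm n x)\<^sup>2 * f x)"
    proof (rule ccontr)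
      assume "\<not> ?thesis"
      hence "(\<integral>x. (enorm n x)\<^sup>2 * f x \<partial>lebn n) = 0" by (rule not_integrable_integral_eq)
      thus False using M2lo n2 by simp
    qed
    have "(\<integral>x. (if \<epsilon> < \<bar>enorm n x / r - 1\<bar> then f x else 0) \<partial>lebn n) \<le> 5 * exp (- (\<epsilon>^2 * n / 48))"
    proof -
      have M2hi': "(\<integral>x. (enorm n x)\<^sup>2 * f x \<partial>lebn n) \<le> real (2 * n)" using M2hi by simp
      have n3: "30000 \<le> n" using nC by simp
      show ?thesis unfolding r_def by (rule final_bound[OF eps0 eps(2) dpos dsm True n3 M2i M2lo M2hi'])
    qed
    also have "\<dots> \<le> exp 400 * exp (- (1/1000) * \<epsilon>\<^sup>2 * real n)"
    proof (intro mult_mono)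
      show "(5::real) \<le> exp 400" using e400 by simp
      have "0 \<le> \<epsilon>^2 * real n" by simp
      thus "exp (- (\<epsilon>^2 * n / 48)) \<le> exp (- (1/1000) * \<epsilon>\<^sup>2 * real n)" by simp
    qed auto
    finally show ?thesis .
  qed
  show "let r = sqrt (\<integral>x. (enorm n x)\<^sup>2 * f x \<partial>lebn n) in
         measure (density (lebn n) (\<lambda>x. ennreal (f x)))
           {x \<in> Rn n. \<bar>enorm n x / r - 1\<bar> > \<epsilon>}
         \<le> exp 400 * exp (- (1/1000) * \<epsilon>\<^sup>2 * real n)"
    unfolding Let_def r_def[symmetric] using meq goal by simp
qed

end
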